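(* Let $A$ be a unital C*-algebra, $\sigma$ a flow on $A$, $\beta\in\mathbb{R}$, and $C\subseteq\mathcal{Z}(A)$ a unital C*-subalgebra of the center of $A$, identified with $C(\Omega(C))$ via the Gelfand transform. Let $K_\beta$ be the set of all $(\sigma,\beta)$-KMS states on $A$ and, for $x\in\Omega(C)$, let $J_x=\{a\in C: a(x)=0\}$ and $K_\beta^x=\{\varphi\in K_\beta:\varphi|_{J_x}=0\}$. Then $$\mathrm{Ext}(K_\beta)=\bigsqcup_{x\in\Omega(C)}\mathrm{Ext}(K_\beta^x).$$ Moreover, if there is a $(\sigma,\beta)$-KMS state on $A$ whose restriction to $C$ is faithful, then $K_\beta^x\neq\emptyset$ for every $x\in\Omega(C)$; in particular, in this case $|\mathrm{Ext}(K_\beta)|\ge|\Omega(C)|$.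
   Context: A flow on $A$ is a strongly continuous action $\sigma$ of $\mathbb{R}$ on $A$ by $^*$-automorphisms. $b$ is analytic if $t\mapsto\sigma_t(b)$ extends to an entire map $z\mapsto\sigma_z(b)$; a state $\varphi$ is $(\sigma,\beta)$-KMS if $\varphi(a\sigma_{i\beta}(b))=\varphi(ba)$ for all $a\in A$ and all analytic $b$. $\Omega(C)$ is the spectrum (character space) of $C$. $\mathrm{Ext}(K)$ denotes the set of extreme points of a convex set $K$. *)

theory Defs
  imports "HOL-Analysis.Analysis"
begin

class complex_banach_algebra_1 = real_normed_algebra_1 + banach +
  fixes cscale :: "complex \<Rightarrow> 'a \<Rightarrow> 'a"
  assumes cscale_of_real: "cscale (complex_of_real r) a = r *\<^sub>R a"
    and cscale_add_right: "cscale c (a + b) = cscale c a + cscale c b"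
    and cscale_add_left: "cscale (c + d) a = cscale c a + cscale d a"
    and cscale_cscale: "cscale c (cscale d a) = cscale (c * d) a"
    and cscale_mult_left: "cscale c a * b = cscale c (a * b)"
    and cscale_mult_right: "a * cscale c b = cscale c (a * b)"
    and norm_cscale: "norm (cscale c a) = cmod c * norm a"

class cstar_algebra_1 = complex_banach_algebra_1 +
  fixes cstar :: "'a \<Rightarrow> 'a"
  assumes cstar_cstar: "cstar (cstar a) = a"
    and cstar_add: "cstar (a + b) = cstar a + cstar b"
    and cstar_cscale: "cstar (cscale c a) = cscale (cnj c) (cstar a)"
    and cstar_mult: "cstar (a * b) = cstar b * cstar a"
    and cstar_identity: "norm (cstar a * a) = norm a ^ 2"

definition star_automorphism :: "('a::cstar_algebra_1 \<Rightarrow> 'a) \<Rightarrow> bool" where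
  "star_automorphism f \<longleftrightarrow> bij f \<and>
     (\<forall>a b. f (a + b) = f a + f b) \<and>
     (\<forall>c a. f (cscale c a) = cscale c (f a)) \<and>
     (\<forall>a b. f (a * b) = f a * f b) \<and>
     (\<forall>a. f (cstar a) = cstar (f a))"

definition is_flow :: "(real \<Rightarrow> 'a::cstar_algebra_1 \<Rightarrow> 'a) \<Rightarrow> bool" where
  "is_flow \<sigma> \<longleftrightarrow> (\<forall>t. star_automorphism (\<sigma> t)) \<and>
     \<sigma> 0 = id \<and> (\<forall>s t. \<sigma> (s + t) = \<sigma> s \<circ> \<sigma> t) \<and>
     (\<forall>a. continuous_on UNIV (\<lambda>t. \<sigma> t a))"

definition entire_map :: "(complex \<Rightarrow> 'a::cstar_algebra_1) \<Rightarrow> bool" where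
  "entire_map F \<longleftrightarrow> (\<forall>z. \<exists>d. (F has_derivative (\<lambda>h. cscale h d)) (at z))"

definition analytic_extension :: "(real \<Rightarrow> 'a::cstar_algebra_1 \<Rightarrow> 'a) \<Rightarrow> 'a \<Rightarrow> (complex \<Rightarrow> 'a) \<Rightarrow> bool" where
  "analytic_extension \<sigma> b F \<longleftrightarrow> entire_map F \<and> (\<forall>t. F (complex_of_real t) = \<sigma> t b)"

definition analytic_elem :: "(real \<Rightarrow> 'a::cstar_algebra_1 \<Rightarrow> 'a) \<Rightarrow> 'a \<Rightarrow> bool" where
  "analytic_elem \<sigma> b \<longleftrightarrow> (\<exists>F. analytic_extension \<sigma> b F)"

definition is_state :: "('a::cstar_algebra_1 \<Rightarrow> complex) \<Rightarrow> bool" where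
  "is_state \<phi> \<longleftrightarrow> (\<forall>a b. \<phi> (a + b) = \<phi> a + \<phi> b) \<and>
     (\<forall>c a. \<phi> (cscale c a) = c * \<phi> a) \<and>
     (\<forall>a. Im (\<phi> (cstar a * a)) = 0 \<and> Re (\<phi> (cstar a * a)) \<ge> 0) \<and>
     \<phi> 1 = 1"

text \<open>The set K_\<beta> of (\<sigma>,\<beta>)-KMS states. Since the entire extension is unique,
  quantifying over all extensions F is the same as using \<sigma>_{i\<beta>}(b) = F(i\<beta>).\<close>
definition KMS_states :: "(real \<Rightarrow> 'a::cstar_algebra_1 \<Rightarrow> 'a) \<Rightarrow> real \<Rightarrow> ('a \<Rightarrow> complex) set" where
  "KMS_states \<sigma> \<beta> = {\<phi>. is_state \<phi> \<and>
     (\<forall>a b F. analytic_extension \<sigma> b F \<longrightarrow>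
        \<phi> (a * F (\<i> * complex_of_real \<beta>)) = \<phi> (b * a))}"

definition center :: "'a::cstar_algebra_1 set" where
  "center = {a. \<forall>b. a * b = b * a}"

definition unital_cstar_subalgebra :: "'a::cstar_algebra_1 set \<Rightarrow> bool" where
  "unital_cstar_subalgebra C \<longleftrightarrow> 1 \<in> C \<and> closed C \<and>
     (\<forall>a\<in>C. \<forall>b\<in>C. a + b \<in> C \<and> a * b \<in> C) \<and>
     (\<forall>c. \<forall>a\<in>C. cscale c a \<in> C) \<and>
     (\<forall>a\<in>C. cstar a \<in> C)"

text \<open>The spectrum \<Omega>(C): nonzero multiplicative complex-linear functionals on C,
  represented extensionally (value 0 outside C). Under the Gelfand transform,
  a(x) = x a.\<close>
definition Omega :: "'a::cstar_algebra_1 set \<Rightarrow> ('a \<Rightarrow> complex) set" where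
  "Omega C = {\<omega>. (\<forall>a\<in>C. \<forall>b\<in>C. \<omega> (a + b) = \<omega> a + \<omega> b \<and> \<omega> (a * b) = \<omega> a * \<omega> b) \<and>
     (\<forall>c. \<forall>a\<in>C. \<omega> (cscale c a) = c * \<omega> a) \<and>
     \<omega> 1 = 1 \<and> (\<forall>a. a \<notin> C \<longrightarrow> \<omega> a = 0)}"

definition J_ideal :: "'a::cstar_algebra_1 set \<Rightarrow> ('a \<Rightarrow> complex) \<Rightarrow> 'a set" where
  "J_ideal C x = {a \<in> C. x a = 0}"

definition KMS_states_at :: "(real \<Rightarrow> 'a::cstar_algebra_1 \<Rightarrow> 'a) \<Rightarrow> real \<Rightarrow> 'a set \<Rightarrow> ('a \<Rightarrow> complex) \<Rightarrow> ('a \<Rightarrow> complex) set" where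
  "KMS_states_at \<sigma> \<beta> C x = {\<phi> \<in> KMS_states \<sigma> \<beta>. \<forall>a\<in>J_ideal C x. \<phi> a = 0}"

definition Ext :: "('a \<Rightarrow> complex) set \<Rightarrow> ('a \<Rightarrow> complex) set" where
  "Ext K = {\<phi> \<in> K. \<forall>\<psi>1\<in>K. \<forall>\<psi>2\<in>K. \<forall>t::real. 0 < t \<and> t < 1 \<and>
      \<phi> = (\<lambda>a. complex_of_real t * \<psi>1 a + complex_of_real (1 - t) * \<psi>2 a) \<longrightarrow> \<psi>1 = \<psi>2}"

definition faithful_on :: "'a::cstar_algebra_1 set \<Rightarrow> ('a \<Rightarrow> complex) \<Rightarrow> bool" where
  "faithful_on C \<phi> \<longleftrightarrow> (\<forall>c\<in>C. \<phi> (cstar c * c) = 0 \<longrightarrow> c = 0)"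

end

theory Submission
  imports Defs "HOL-Computational_Algebra.Formal_Power_Series"
begin




lemma cscale_zero_left [simp]: "cscale 0 (a::'a::complex_banach_algebra_1) = 0"
  using cscale_of_real[of 0 a] by simp

lemma cscale_one [simp]: "cscale 1 (a::'a::complex_banach_algebra_1) = a"
  using cscale_of_real[of 1 a] by simp

lemma cscale_minus_left: "cscale (- c) (a::'a::complex_banach_algebra_1) = - cscale c a"
  using cscale_add_left[of c "-c" a] by (simp add: eq_neg_iff_add_eq_0 add.commute)

lemma cscale_zero_right [simp]: "cscale c (0::'a::complex_banach_algebra_1) = 0"
  using cscale_add_right[of c 0 0] by simp

lemma cscale_minus_right: "cscale c (- a::'a::complex_banach_algebra_1) = - cscale c a"
  using cscale_add_right[of c a "-a"] by (simp add: eq_neg_iff_add_eq_0 add.commute)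

lemma cscale_diff_right: "cscale c (a - b::'a::complex_banach_algebra_1) = cscale c a - cscale c b"
  using cscale_add_right[of c a "-b"] by (simp add: cscale_minus_right)

lemma cscale_diff_left: "cscale (c - d) (a::'a::complex_banach_algebra_1) = cscale c a - cscale d a"
  using cscale_add_left[of c "-d" a] by (simp add: cscale_minus_left)

lemma cscale_real: "cscale (of_real r) (a::'a::complex_banach_algebra_1) = r *\<^sub>R a"
  by (rule cscale_of_real)

lemma cscale_sum_right: "cscale c (sum f A) = sum (\<lambda>i. cscale c (f i :: 'a::complex_banach_algebra_1)) A"
  by (induction A rule: infinite_finite_induct) (auto simp: cscale_add_right)

lemma cstar_zero [simp]: "cstar (0::'a::cstar_algebra_1) = 0"
  using cstar_add[of 0 0] by simp

lemma cstar_minus: "cstar (- a::'a::cstar_algebra_1) = - cstar a"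
  using cstar_add[of a "-a"] by (simp add: eq_neg_iff_add_eq_0 add.commute)

lemma cstar_diff: "cstar (a - b::'a::cstar_algebra_1) = cstar a - cstar b"
  using cstar_add[of a "-b"] by (simp add: cstar_minus)

lemma cstar_scaleR: "cstar (r *\<^sub>R a::'a::cstar_algebra_1) = r *\<^sub>R cstar a"
  using cstar_cscale[of "of_real r" a] by (simp add: cscale_of_real)

lemma cstar_one [simp]: "cstar (1::'a::cstar_algebra_1) = 1"
proof -
  have "cstar (cstar 1 * (1::'a)) = cstar 1 * cstar (cstar 1)" by (rule cstar_mult)
  hence "cstar (cstar (1::'a)) = cstar 1" by (simp add: cstar_cstar)
  thus ?thesis by (simp add: cstar_cstar)
qed

lemma cstar_eq_iff [simp]: "cstar a = cstar b \<longleftrightarrow> (a::'a::cstar_algebra_1) = b"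
  by (metis cstar_cstar)

lemma cstar_eq_zero_iff [simp]: "cstar a = 0 \<longleftrightarrow> (a::'a::cstar_algebra_1) = 0"
  by (metis cstar_cstar cstar_zero)

lemma norm_cstar_le: "norm (a::'a::cstar_algebra_1) \<le> norm (cstar a)"
proof (cases "a = 0")
  case True thus ?thesis by simp
next
  case False
  have "norm a ^ 2 = norm (cstar a * a)" by (simp add: cstar_identity)
  also have "\<dots> \<le> norm (cstar a) * norm a" by (rule norm_mult_ineq)
  finally have "norm a * norm a \<le> norm (cstar a) * norm a" by (simp add: power2_eq_square)
  thus ?thesis using False by simp
qed

lemma norm_cstar [simp]: "norm (cstar a) = norm (a::'a::cstar_algebra_1)"
  by (metis antisym cstar_cstar norm_cstar_le)

lemma bounded_linear_cstar: "bounded_linear (cstar :: 'a::cstar_algebra_1 \<Rightarrow> 'a)"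
  by (rule bounded_linear_intro[where K=1]) (auto simp: cstar_add cstar_scaleR)

lemma cstar_power: "cstar ((a::'a::cstar_algebra_1) ^ n) = cstar a ^ n"
  by (induction n) (auto simp: cstar_mult power_commutes)

lemma cstar_sum: "cstar (sum f A) = sum (\<lambda>i. cstar (f i::'a::cstar_algebra_1)) A"
  by (induction A rule: infinite_finite_induct) (auto simp: cstar_add)

lemma cstar_suminf: "summable f \<Longrightarrow> cstar (suminf f) = (\<Sum>n. cstar (f n::'a::cstar_algebra_1))"
  using bounded_linear.suminf[OF bounded_linear_cstar] by blast

lemma continuous_cstar: "continuous_on S (cstar :: 'a::cstar_algebra_1 \<Rightarrow> 'a)"
  by (simp add: linear_continuous_on bounded_linear_cstar)

lemma norm_cstar_mult_self: "norm (cstar a * a) = norm (a::'a::cstar_algebra_1) ^ 2"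
  by (rule cstar_identity)



definition sqc :: "nat \<Rightarrow> real" where
  "sqc n = ((1/2) gchoose n) * (-1) ^ n"

lemma sqc_0 [simp]: "sqc 0 = 1" by (simp add: sqc_def)

lemma sqc_nonpos: assumes "n \<ge> 1" shows "sqc n \<le> 0"
proof -
  obtain m where n: "n = Suc m" using assms by (cases n) auto
  have "((1/2::real) gchoose n) = (-1)^n * ((of_nat n - 1/2 - 1) gchoose n)"
    by (rule gbinomial_negated_upper)
  hence "sqc n = ((of_nat n - 1/2 - 1) gchoose n)"
    by (simp add: sqc_def power_mult_distrib[symmetric] flip: power_add mult_2)
  also have "\<dots> = (\<Prod>i=0..<n. (of_nat n - 1/2 - 1) - of_nat i) / fact n"
    by (simp add: gbinomial_prod_rev)
  also have "(\<Prod>i=0..<n. (of_nat n - 1/2 - 1::real) - of_nat i)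
      = (of_nat n - 1/2 - 1 - of_nat m) * (\<Prod>i=0..<m. (of_nat n - 1/2 - 1) - of_nat i)"
    by (simp add: n)
  also have "(of_nat n - 1/2 - 1 - of_nat m :: real) = -1/2" by (simp add: n)
  finally have eq: "sqc n = - (1/2) * (\<Prod>i=0..<m. (of_nat n - 1/2 - 1::real) - of_nat i) / fact n" by simp
  have "(\<Prod>i=0..<m. (of_nat n - 1/2 - 1::real) - of_nat i) \<ge> 0"
    by (rule prod_nonneg) (auto simp: n)
  thus ?thesis unfolding eq by (simp add: divide_nonpos_pos mult_nonneg_nonneg)
qed

lemma sqc_partial_nonneg: "(\<Sum>k\<le>m. sqc k) \<ge> 0"
proof -
  have "(\<Sum>k\<le>m. sqc k) = (- 1) ^ m * ((1/2::real) - 1 gchoose m)"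
    unfolding sqc_def by (rule gbinomial_sum_lower_neg)
  also have "((1/2::real) - 1 gchoose m) = (-1)^m * ((of_nat m - (1/2 - 1) - 1) gchoose m)"
    by (rule gbinomial_negated_upper)
  finally have "(\<Sum>k\<le>m. sqc k) = ((of_nat m - 1/2) gchoose m)"
    by (simp add: power_mult_distrib[symmetric])
  also have "\<dots> = (\<Prod>i=0..<m. (of_nat m - 1/2) - of_nat i) / fact m"
    by (simp add: gbinomial_prod_rev)
  also have "\<dots> \<ge> 0"
    by (rule divide_nonneg_pos, rule prod_nonneg) auto
  finally show ?thesis .
qed

lemma sqc_abs_partial: "(\<Sum>k\<le>m. \<bar>sqc k\<bar>) = 2 - (\<Sum>k\<le>m. sqc k)"
proof (induction m)
  case 0 thus ?case by simp
next
  case (Suc m)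
  have "sqc (Suc m) \<le> 0" by (rule sqc_nonpos) simp
  thus ?case using Suc by simp
qed

lemma summable_abs_sqc: "summable (\<lambda>n. \<bar>sqc n\<bar>)"
proof (rule bounded_imp_summable)
  fix n show "(\<Sum>k\<le>n. \<bar>sqc k\<bar>) \<le> 2" using sqc_abs_partial sqc_partial_nonneg by simp
qed simp

lemma suminf_abs_sqc_tail: "(\<Sum>n. \<bar>sqc (Suc n)\<bar>) \<le> 1"
proof -
  have s: "summable (\<lambda>n. \<bar>sqc (Suc n)\<bar>)"
    using summable_abs_sqc by (subst summable_Suc_iff)
  show ?thesis
  proof (rule suminf_le_const[OF s])
    fix n
    have "(\<Sum>k\<le>n. \<bar>sqc k\<bar>) = \<bar>sqc 0\<bar> + (\<Sum>i<n. \<bar>sqc (Suc i)\<bar>)"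
      by (simp only: lessThan_Suc_atMost[symmetric] sum.lessThan_Suc_shift)
    hence "(\<Sum>i<n. \<bar>sqc (Suc i)\<bar>) = (\<Sum>k\<le>n. \<bar>sqc k\<bar>) - 1" by simp
    thus "(\<Sum>i<n. \<bar>sqc (Suc i)\<bar>) \<le> 1" using sqc_abs_partial[of n] sqc_partial_nonneg[of n] by simp
  qed
qed

definition sqr :: "'a::{real_normed_algebra_1,banach} \<Rightarrow> 'a" where
  "sqr u = (\<Sum>n. sqc n *\<^sub>R u ^ n)"

lemma summable_sqr_norm:
  fixes u :: "'a::{real_normed_algebra_1,banach}"
  assumes "norm u \<le> 1"
  shows "summable (\<lambda>n. norm (sqc n *\<^sub>R u ^ n))"
proof (rule summable_comparison_test[OF _ summable_abs_sqc])
  show "\<exists>N. \<forall>n\<ge>N. norm (norm (sqc n *\<^sub>R u ^ n)) \<le> \<bar>sqc n\<bar>"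
  proof (intro exI allI impI)
    fix n
    have "norm (u ^ n) \<le> norm u ^ n" by (rule norm_power_ineq)
    also have "\<dots> \<le> 1" using assms by (simp add: power_le_one)
    finally show "norm (norm (sqc n *\<^sub>R u ^ n)) \<le> \<bar>sqc n\<bar>"
      by (simp add: mult_left_le)
  qed
qed

lemma summable_sqr:
  fixes u :: "'a::{real_normed_algebra_1,banach}"
  assumes "norm u \<le> 1"
  shows "summable (\<lambda>n. sqc n *\<^sub>R u ^ n)"
  using summable_norm_cancel[OF summable_sqr_norm[OF assms]] .

lemma sqc_conv: "(\<Sum>i\<le>k. sqc i * sqc (k - i)) = (-1)^k * of_nat (1 choose k)"
proof -
  have "(\<Sum>i\<le>k. sqc i * sqc (k - i)) = (\<Sum>i\<le>k. (-1)^k * (((1/2::real) gchoose i) * ((1/2) gchoose (k - i))))"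
  proof (rule sum.cong)
    fix i assume "i \<in> {..k}"
    hence "(-1::real)^i * (-1)^(k-i) = (-1)^k" by (simp flip: power_add)
    thus "sqc i * sqc (k - i) = (-1)^k * (((1/2::real) gchoose i) * ((1/2) gchoose (k - i)))"
      unfolding sqc_def by (metis (no_types, lifting) mult.commute mult.left_commute)
  qed simp
  also have "\<dots> = (-1)^k * (\<Sum>i=0..k. ((1/2::real) gchoose i) * ((1/2) gchoose (k - i)))"
    by (simp add: sum_distrib_left atMost_atLeast0)
  also have "\<dots> = (-1)^k * ((1/2 + 1/2::real) gchoose k)" by (simp only: gbinomial_Vandermonde)
  also have "((1/2 + 1/2::real) gchoose k) = of_nat (1 choose k)"
    using binomial_gbinomial[of 1 k, where 'a=real] by simp
  finally show ?thesis .
qed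

lemma sqr_square:
  fixes u :: "'a::{real_normed_algebra_1,banach}"
  assumes "norm u \<le> 1"
  shows "sqr u * sqr u = 1 - u"
proof -
  have "sqr u * sqr u = (\<Sum>k. \<Sum>i\<le>k. (sqc i *\<^sub>R u ^ i) * (sqc (k - i) *\<^sub>R u ^ (k - i)))"
    unfolding sqr_def by (rule Cauchy_product[OF summable_sqr_norm[OF assms] summable_sqr_norm[OF assms]])
  also have "\<dots> = (\<Sum>k. ((-1)^k * of_nat (1 choose k)) *\<^sub>R u ^ k)"
  proof (rule suminf_cong)
    fix k
    have "(\<Sum>i\<le>k. (sqc i *\<^sub>R u ^ i) * (sqc (k - i) *\<^sub>R u ^ (k - i)))
        = (\<Sum>i\<le>k. (sqc i * sqc (k - i)) *\<^sub>R u ^ k)"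
    proof (rule sum.cong)
      fix i assume "i \<in> {..k}"
      hence "u ^ i * u ^ (k - i) = u ^ k" by (simp flip: power_add)
      thus "(sqc i *\<^sub>R u ^ i) * (sqc (k - i) *\<^sub>R u ^ (k - i)) = (sqc i * sqc (k - i)) *\<^sub>R u ^ k"
        by simp
    qed simp
    also have "\<dots> = (\<Sum>i\<le>k. sqc i * sqc (k - i)) *\<^sub>R u ^ k" by (simp add: scaleR_sum_left)
    finally show "(\<Sum>i\<le>k. (sqc i *\<^sub>R u ^ i) * (sqc (k - i) *\<^sub>R u ^ (k - i)))
        = ((-1)^k * of_nat (1 choose k)) *\<^sub>R u ^ k" by (simp add: sqc_conv)
  qed
  also have "\<dots> = (\<Sum>k\<in>{0,1}. ((-1)^k * of_nat (1 choose k)) *\<^sub>R u ^ k)"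
    by (rule suminf_finite) auto
  also have "\<dots> = 1 - u" by simp
  finally show ?thesis .
qed

lemma sqr_norm_one_minus:
  fixes u :: "'a::{real_normed_algebra_1,banach}"
  assumes "norm u \<le> 1"
  shows "norm (1 - sqr u) \<le> 1"
proof -
  let ?f = "\<lambda>n. sqc n *\<^sub>R u ^ n"
  have "sqr u = (\<Sum>n. ?f (Suc n)) + 1"
    unfolding sqr_def using suminf_split_head[OF summable_sqr[OF assms]] by simp
  hence "1 - sqr u = - (\<Sum>n. ?f (Suc n))" by simp
  hence "norm (1 - sqr u) = norm (\<Sum>n. ?f (Suc n))" by simp
  also have "\<dots> \<le> (\<Sum>n. norm (?f (Suc n)))"
    by (rule summable_norm) (subst summable_Suc_iff, rule summable_sqr_norm[OF assms])
  also have "\<dots> \<le> (\<Sum>n. \<bar>sqc (Suc n)\<bar>)"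
  proof (rule suminf_le)
    fix n
    have "norm (u ^ Suc n) \<le> norm u ^ Suc n" by (rule norm_power_ineq)
    also have "\<dots> \<le> 1" using assms by (intro power_le_one) auto
    finally show "norm (?f (Suc n)) \<le> \<bar>sqc (Suc n)\<bar>" by (simp add: mult_left_le)
  next
    show "summable (\<lambda>n. norm (?f (Suc n)))"
      by (subst summable_Suc_iff) (rule summable_sqr_norm[OF assms])
    show "summable (\<lambda>n. \<bar>sqc (Suc n)\<bar>)" by (subst summable_Suc_iff) (rule summable_abs_sqc)
  qed
  also have "\<dots> \<le> 1" by (rule suminf_abs_sqc_tail)
  finally show ?thesis .
qed

lemma sqr_commute:
  fixes u y :: "'a::{real_normed_algebra_1,banach}"
  assumes "norm u \<le> 1" "y * u = u * y"
  shows "y * sqr u = sqr u * y"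
proof -
  have pc: "y * u ^ n = u ^ n * y" for n
    by (induction n) (simp_all, metis assms(2) mult.assoc)
  have "y * sqr u = (\<Sum>n. y * (sqc n *\<^sub>R u ^ n))"
    unfolding sqr_def by (rule suminf_mult[symmetric, OF summable_sqr[OF assms(1)]])
  also have "\<dots> = (\<Sum>n. (sqc n *\<^sub>R u ^ n) * y)" by (simp add: pc)
  also have "\<dots> = sqr u * y"
    unfolding sqr_def by (rule suminf_mult2[symmetric, OF summable_sqr[OF assms(1)]])
  finally show ?thesis .
qed

lemma sqr_in_closed_subalgebra:
  fixes u :: "'a::{real_normed_algebra_1,banach}"
  assumes "norm u \<le> 1" "closed S" "1 \<in> S" "\<And>a b. a \<in> S \<Longrightarrow> b \<in> S \<Longrightarrow> a + b \<in> S"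
    "\<And>a b. a \<in> S \<Longrightarrow> b \<in> S \<Longrightarrow> a * b \<in> S" "\<And>r a. a \<in> S \<Longrightarrow> r *\<^sub>R a \<in> S" "u \<in> S"
  shows "sqr u \<in> S"
proof -
  have "0 \<in> S" using assms(6)[of 1 0] assms(3) by simp
  have pw: "u ^ n \<in> S" for n by (induction n) (use assms in auto)
  have ps: "(\<Sum>i<n. sqc i *\<^sub>R u ^ i) \<in> S" for n
    by (induction n) (use assms pw \<open>0 \<in> S\<close> in auto)
  show ?thesis unfolding sqr_def
    by (rule Lim_in_closed_set[OF assms(2) _ _ summable_LIMSEQ[OF summable_sqr[OF assms(1)]]])
       (use ps in auto)
qed

lemma sqr_cstar:
  fixes u :: "'a::cstar_algebra_1"
  assumes "norm u \<le> 1"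
  shows "cstar (sqr u) = sqr (cstar u)"
  unfolding sqr_def using cstar_suminf[OF summable_sqr[OF assms]]
  by (simp add: cstar_scaleR cstar_power)

lemma sqr_selfadj:
  fixes u :: "'a::cstar_algebra_1"
  assumes "norm u \<le> 1" "cstar u = u"
  shows "cstar (sqr u) = sqr u"
  using sqr_cstar[OF assms(1)] assms(2) by simp



lemma st_add: "is_state \<phi> \<Longrightarrow> \<phi> (a + b) = \<phi> a + \<phi> b" by (simp add: is_state_def)
lemma st_cscale: "is_state \<phi> \<Longrightarrow> \<phi> (cscale c a) = c * \<phi> a" by (simp add: is_state_def)
lemma st_one: "is_state \<phi> \<Longrightarrow> \<phi> 1 = 1" by (simp add: is_state_def)
lemma st_pos_Im: "is_state \<phi> \<Longrightarrow> Im (\<phi> (cstar a * a)) = 0" by (simp add: is_state_def)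
lemma st_pos_Re: "is_state \<phi> \<Longrightarrow> Re (\<phi> (cstar a * a)) \<ge> 0" by (simp add: is_state_def)

lemma st_zero: "is_state \<phi> \<Longrightarrow> \<phi> 0 = 0"
  using st_add[of \<phi> 0 0] by simp

lemma st_minus: "is_state \<phi> \<Longrightarrow> \<phi> (- a) = - \<phi> a"
  using st_add[of \<phi> a "-a"] st_zero[of \<phi>] by (simp add: eq_neg_iff_add_eq_0 add.commute)

lemma st_diff: "is_state \<phi> \<Longrightarrow> \<phi> (a - b) = \<phi> a - \<phi> b"
  using st_add[of \<phi> a "-b"] st_minus[of \<phi> b] by simp

lemma st_scaleR: "is_state \<phi> \<Longrightarrow> \<phi> (r *\<^sub>R a) = of_real r * \<phi> a"
  using st_cscale[of \<phi> "of_real r" a] by (simp add: cscale_of_real)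

lemma st_sum: "is_state \<phi> \<Longrightarrow> \<phi> (sum f A) = (\<Sum>i\<in>A. \<phi> (f i))"
  by (induction A rule: infinite_finite_induct) (auto simp: st_add st_zero)

lemma st_pos: "is_state \<phi> \<Longrightarrow> \<phi> (cstar a * a) = of_real (Re (\<phi> (cstar a * a)))"
  using st_pos_Im[of \<phi> a] by (simp add: complex_eq_iff)

lemma st_selfadj_real:
  fixes h :: "'a::cstar_algebra_1"
  assumes "is_state \<phi>" "cstar h = h"
  shows "Im (\<phi> h) = 0"
proof -
  define p where "p = (1/2::real) *\<^sub>R (h + 1)"
  define q where "q = (1/2::real) *\<^sub>R (h - 1)"
  have cp: "cstar p = p" "cstar q = q" using assms(2)
    by (simp_all add: p_def q_def cstar_scaleR cstar_add cstar_diff)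
  have e4: "(h+1)*(h+1) - (h-1)*(h-1) = (4::real) *\<^sub>R h"
  proof -
    have "(h+1)*(h+1) - (h-1)*(h-1) = h+h+h+h" by (simp add: algebra_simps)
    also have "\<dots> = (1+1+1+1::real) *\<^sub>R h" by (simp only: scaleR_add_left scaleR_one)
    finally show ?thesis by simp
  qed
  have "p * p - q * q = ((1/2::real)*(1/2)) *\<^sub>R ((h+1)*(h+1)) - ((1/2::real)*(1/2)) *\<^sub>R ((h-1)*(h-1))"
    by (simp only: p_def q_def mult_scaleR_left mult_scaleR_right scaleR_scaleR)
  also have "\<dots> = ((1/2::real)*(1/2)) *\<^sub>R ((h+1)*(h+1) - (h-1)*(h-1))"
    by (rule scaleR_diff_right[symmetric])
  finally have "p * p - q * q = ((1/2::real)*(1/2)) *\<^sub>R ((h+1)*(h+1) - (h-1)*(h-1))" .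
  hence "cstar p * p - cstar q * q = h" unfolding cp e4 by simp
  hence "\<phi> h = \<phi> (cstar p * p) - \<phi> (cstar q * q)" using st_diff[OF assms(1)] by metis
  thus ?thesis using st_pos_Im[OF assms(1)] by simp
qed

lemma st_herm:
  fixes a :: "'a::cstar_algebra_1"
  assumes "is_state \<phi>"
  shows "\<phi> (cstar a) = cnj (\<phi> a)"
proof -
  have "cstar (a + cstar a) = a + cstar a" by (simp add: cstar_add cstar_cstar add.commute)
  hence 1: "Im (\<phi> a + \<phi> (cstar a)) = 0"
    using st_selfadj_real[OF assms] st_add[OF assms] by metis
  have "cstar (cscale \<i> (a - cstar a)) = cscale \<i> (a - cstar a)"
    by (simp add: cstar_cscale cstar_diff cstar_cstar cscale_diff_right cscale_minus_left)
  hence "Im (\<phi> (cscale \<i> (a - cstar a))) = 0" by (rule st_selfadj_real[OF assms])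
  hence 2: "Re (\<phi> a - \<phi> (cstar a)) = 0"
    by (simp add: st_cscale[OF assms] st_diff[OF assms])
  from 1 2 show ?thesis by (simp add: complex_eq_iff)
qed

lemma st_CS:
  fixes a :: "'a::cstar_algebra_1"
  assumes "is_state \<phi>"
  shows "cmod (\<phi> a) ^ 2 \<le> Re (\<phi> (cstar a * a))"
proof -
  define l where "l = \<phi> a"
  define b where "b = a - cscale l 1"
  have cb: "cstar b = cstar a - cscale (cnj l) 1"
    by (simp add: b_def cstar_diff cstar_cscale)
  have "cstar b * b = cstar a * a - cscale l (cstar a) - cscale (cnj l) a + cscale (cnj l * l) 1"
    unfolding cb unfolding b_def
    by (simp add: algebra_simps cscale_mult_left cscale_mult_right cscale_cscale mult.commute cscale_diff_right)
  hence "\<phi> (cstar b * b) = \<phi> (cstar a * a) - l * cnj l - cnj l * l + cnj l * l"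
    using assms by (simp add: st_add st_diff st_cscale st_one st_herm l_def)
  hence "Re (\<phi> (cstar b * b)) = Re (\<phi> (cstar a * a)) - cmod l ^ 2"
    by (simp add: complex_mult_cnj cmod_power2)
  thus ?thesis using st_pos_Re[OF assms, of b] by (simp add: l_def)
qed

lemma st_selfadj_le1:
  fixes h :: "'a::cstar_algebra_1"
  assumes "is_state \<phi>" "cstar h = h" "norm h \<le> 1"
  shows "Re (\<phi> h) \<le> 1"
proof -
  let ?s = "sqr h"
  have "1 - h = cstar ?s * ?s" using sqr_selfadj[OF assms(3,2)] sqr_square[OF assms(3)] by simp
  hence "Re (\<phi> (1 - h)) \<ge> 0" using st_pos_Re[OF assms(1)] by metis
  thus ?thesis using assms(1) by (simp add: st_diff st_one)
qed

lemma st_selfadj_bound: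
  fixes h :: "'a::cstar_algebra_1"
  assumes "is_state \<phi>" "cstar h = h"
  shows "cmod (\<phi> h) \<le> norm h"
proof (cases "h = 0")
  case True thus ?thesis using st_zero[OF assms(1)] by simp
next
  case False
  define h' where "h' = (1 / norm h) *\<^sub>R h"
  have n: "norm h' \<le> 1" "norm (- h') \<le> 1" using False by (simp_all add: h'_def)
  have c: "cstar h' = h'" "cstar (- h') = - h'" using assms(2)
    by (simp_all add: h'_def cstar_scaleR cstar_minus)
  have "Re (\<phi> h') \<le> 1" "Re (\<phi> (- h')) \<le> 1"
    using st_selfadj_le1[OF assms(1) c(1) n(1)] st_selfadj_le1[OF assms(1) c(2) n(2)] by auto
  moreover have "Im (\<phi> h') = 0" by (rule st_selfadj_real[OF assms(1) c(1)])
  ultimately have "cmod (\<phi> h') \<le> 1"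
    using st_minus[OF assms(1)] by (simp add: cmod_def abs_le_iff)
  moreover have "\<phi> h' = of_real (1 / norm h) * \<phi> h" by (simp add: h'_def st_scaleR[OF assms(1)])
  ultimately have "(1 / norm h) * cmod (\<phi> h) \<le> 1" by (simp add: norm_mult norm_divide)
  thus ?thesis using False by (simp add: field_simps)
qed

lemma selfadj_decomp:
  fixes a :: "'a::cstar_algebra_1"
  defines "h \<equiv> (1/2::real) *\<^sub>R (a + cstar a)" and "k \<equiv> cscale (- \<i> / 2) (a - cstar a)"
  shows "a = h + cscale \<i> k" "cstar h = h" "cstar k = k" "norm h \<le> norm a" "norm k \<le> norm a"
proof -
  have "cscale \<i> k = (1/2::real) *\<^sub>R (a - cstar a)"
    unfolding k_def cscale_cscale by (simp flip: cscale_of_real)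
  moreover have "(1/2::real) *\<^sub>R (a + cstar a) + (1/2::real) *\<^sub>R (a - cstar a) = a"
    by (simp add: scaleR_add_right scaleR_diff_right flip: scaleR_add_left)
  ultimately show "a = h + cscale \<i> k" unfolding h_def by simp
  show "cstar h = h" by (simp add: h_def cstar_scaleR cstar_add cstar_cstar add.commute)
  show "cstar k = k"
    by (simp add: k_def cstar_cscale cstar_diff cstar_cstar cscale_diff_right cscale_minus_left)
  have "norm (a + cstar a) \<le> 2 * norm a" using norm_triangle_ineq[of a "cstar a"] by simp
  thus "norm h \<le> norm a" by (simp add: h_def)
  have "norm (a - cstar a) \<le> 2 * norm a" using norm_triangle_ineq4[of a "cstar a"] by simp
  thus "norm k \<le> norm a" by (simp add: k_def norm_cscale norm_divide)
qed

lemma st_bound: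
  fixes a :: "'a::cstar_algebra_1"
  assumes "is_state \<phi>"
  shows "cmod (\<phi> a) \<le> 2 * norm a"
proof -
  obtain h k where d: "a = h + cscale \<i> k" "cstar h = h" "cstar k = k" "norm h \<le> norm a" "norm k \<le> norm a"
    using selfadj_decomp[of a] by blast
  have "\<phi> a = \<phi> h + \<i> * \<phi> k" using d(1) assms by (simp add: st_add st_cscale)
  hence "cmod (\<phi> a) \<le> cmod (\<phi> h) + cmod (\<phi> k)"
    by (metis norm_triangle_ineq mult_1 norm_ii norm_mult)
  also have "\<dots> \<le> norm h + norm k"
    using st_selfadj_bound[OF assms d(2)] st_selfadj_bound[OF assms d(3)] by simp
  finally show ?thesis using d by simp
qed



lemma KMS_state: "\<phi> \<in> KMS_states \<sigma> \<beta> \<Longrightarrow> is_state \<phi>"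
  by (simp add: KMS_states_def)

lemma centerD: "g \<in> center \<Longrightarrow> g * b = b * g" by (simp add: center_def)

lemma kms_weight:
  fixes s :: "'a::cstar_algebra_1"
  assumes phi: "\<phi> \<in> KMS_states \<sigma> \<beta>" and s: "s \<in> center" "cstar s \<in> center"
    and pos: "Re (\<phi> (cstar s * s)) > 0"
  shows "(\<lambda>a. \<phi> (cstar s * s * a) / \<phi> (cstar s * s)) \<in> KMS_states \<sigma> \<beta>"
proof -
  let ?g = "cstar s * s"
  have st: "is_state \<phi>" using phi by (rule KMS_state)
  have gc: "?g * b = b * ?g" for b
  proof -
    have "cstar s * s * b = cstar s * (s * b)" by (simp add: mult.assoc)
    also have "\<dots> = cstar s * (b * s)" using centerD[OF s(1), of b] by simp
    also have "\<dots> = (cstar s * b) * s" by (simp add: mult.assoc)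
    also have "\<dots> = (b * cstar s) * s" using centerD[OF s(2), of b] by simp
    also have "\<dots> = b * (cstar s * s)" by (simp add: mult.assoc)
    finally show ?thesis .
  qed
  have greal: "\<phi> ?g = of_real (Re (\<phi> ?g))" by (rule st_pos[OF st])
  have gnz: "\<phi> ?g \<noteq> 0" using pos by auto
  have posa: "\<phi> (?g * (cstar a * a)) = \<phi> (cstar (s * a) * (s * a))" for a
  proof -
    have "?g * (cstar a * a) = (?g * cstar a) * a" by (simp only: mult.assoc)
    also have "\<dots> = cstar a * ?g * a" by (simp only: gc)
    also have "\<dots> = cstar a * cstar s * (s * a)" by (simp only: mult.assoc)
    also have "\<dots> = cstar (s * a) * (s * a)" by (simp add: cstar_mult mult.assoc)
    finally show ?thesis by simp
  qed
  show ?thesis unfolding KMS_states_def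
  proof (intro CollectI conjI allI impI)
    show "is_state (\<lambda>a. \<phi> (?g * a) / \<phi> ?g)" unfolding is_state_def
    proof (intro conjI allI)
      fix a b show "\<phi> (?g * (a + b)) / \<phi> ?g = \<phi> (?g * a) / \<phi> ?g + \<phi> (?g * b) / \<phi> ?g"
        by (simp add: distrib_left st_add[OF st] add_divide_distrib)
    next
      fix c a show "\<phi> (?g * cscale c a) / \<phi> ?g = c * (\<phi> (?g * a) / \<phi> ?g)"
        by (simp add: cscale_mult_right st_cscale[OF st])
    next
      fix a
      have e: "\<phi> (?g * (cstar a * a)) = of_real (Re (\<phi> (cstar (s * a) * (s * a))))"
        unfolding posa by (rule st_pos[OF st])
      show "Im (\<phi> (?g * (cstar a * a)) / \<phi> ?g) = 0"
        by (subst e, subst greal, simp only: of_real_divide[symmetric] Im_complex_of_real)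
      show "Re (\<phi> (?g * (cstar a * a)) / \<phi> ?g) \<ge> 0"
        apply (subst e, subst greal, simp only: of_real_divide[symmetric] Re_complex_of_real)
        using st_pos_Re[OF st, of "s * a"] pos by simp
    next
      show "\<phi> (?g * 1) / \<phi> ?g = 1" using gnz by simp
    qed
  next
    fix a b F assume F: "analytic_extension \<sigma> b F"
    have "\<phi> (?g * a * F (\<i> * complex_of_real \<beta>)) = \<phi> (b * (?g * a))"
      using phi F unfolding KMS_states_def by blast
    also have "b * (?g * a) = ?g * (b * a)"
    proof -
      have "b * (?g * a) = (b * ?g) * a" by (rule mult.assoc[symmetric])
      also have "\<dots> = (?g * b) * a" by (simp only: gc[of b, symmetric])
      also have "\<dots> = ?g * (b * a)" by (rule mult.assoc)
      finally show ?thesis .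
    qed
    finally show "\<phi> (?g * (a * F (\<i> * complex_of_real \<beta>))) / \<phi> ?g = \<phi> (?g * (b * a)) / \<phi> ?g"
      by (simp add: mult.assoc)
  qed
qed

lemma center_scaleR: "h \<in> center \<Longrightarrow> r *\<^sub>R h \<in> center"
  by (simp add: center_def)

lemma center_minus: "h \<in> center \<Longrightarrow> - h \<in> center"
  by (simp add: center_def)

lemma center_one: "1 \<in> center" by (simp add: center_def)

lemma center_add: "h \<in> center \<Longrightarrow> g \<in> center \<Longrightarrow> h + g \<in> center"
  by (simp add: center_def algebra_simps)

lemma center_mult: assumes "h \<in> center" "g \<in> center" shows "h * g \<in> center"
  unfolding center_def
proof (intro CollectI allI)
  fix b
  have hb: "h * b = b * h" and gb: "g * b = b * g" using assms by (auto simp: center_def)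
  have "h * g * b = h * (g * b)" by (simp only: mult.assoc)
  also have "\<dots> = (h * b) * g" by (simp only: gb mult.assoc)
  also have "\<dots> = b * (h * g)" by (simp only: hb mult.assoc)
  finally show "h * g * b = b * (h * g)" .
qed

lemma center_sqr: assumes "h \<in> center" "norm h \<le> 1" shows "sqr h \<in> center"
proof -
  have "y * sqr h = sqr h * y" for y
    by (rule sqr_commute[OF assms(2)]) (use centerD[OF assms(1)] in simp)
  thus ?thesis by (simp add: center_def)
qed

lemma ext_mult_small:
  fixes h :: "'a::cstar_algebra_1"
  assumes ext: "\<phi> \<in> Ext (KMS_states \<sigma> \<beta>)" and h: "h \<in> center" "cstar h = h" "norm h < 1"
  shows "\<phi> (h * a) = \<phi> h * \<phi> a"
proof -
  have phiK: "\<phi> \<in> KMS_states \<sigma> \<beta>" using ext by (simp add: Ext_def)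
  have st: "is_state \<phi>" using phiK by (rule KMS_state)
  define s1 where "s1 = sqr (- h)"
  define s2 where "s2 = sqr h"
  have n1: "norm (- h) \<le> 1" "norm h \<le> 1" using h by auto
  have s1: "s1 * s1 = 1 + h" "cstar s1 = s1" "s1 \<in> center"
    using sqr_square[OF n1(1)] sqr_selfadj[OF n1(1)] center_sqr[OF center_minus[OF h(1)] n1(1)] h(2)
    by (simp_all add: s1_def cstar_minus)
  have s2: "s2 * s2 = 1 - h" "cstar s2 = s2" "s2 \<in> center"
    using sqr_square[OF n1(2)] sqr_selfadj[OF n1(2)] center_sqr[OF h(1) n1(2)] h(2)
    by (simp_all add: s2_def)
  have hr: "Im (\<phi> h) = 0" by (rule st_selfadj_real[OF st h(2)])
  have hb: "cmod (\<phi> h) < 1" using st_selfadj_bound[OF st h(2)] h(3) by linarith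
  have hb2: "\<bar>Re (\<phi> h)\<bar> < 1" using hb abs_Re_le_cmod[of "\<phi> h"] by linarith
  define t where "t = (1 + Re (\<phi> h)) / 2"
  have t: "0 < t" "t < 1" using hb2 by (auto simp: t_def)
  have g1: "\<phi> (cstar s1 * s1) = of_real (2 * t)"
    using s1 hr by (simp add: st_add[OF st] st_one[OF st] t_def complex_eq_iff)
  have g2: "\<phi> (cstar s2 * s2) = of_real (2 * (1 - t))"
  proof -
    have "\<phi> (cstar s2 * s2) = 1 - \<phi> h" using s2 by (simp add: st_diff[OF st] st_one[OF st])
    thus ?thesis using hr by (simp add: t_def complex_eq_iff field_simps)
  qed
  define \<psi>1 where "\<psi>1 = (\<lambda>a. \<phi> (cstar s1 * s1 * a) / \<phi> (cstar s1 * s1))"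
  define \<psi>2 where "\<psi>2 = (\<lambda>a. \<phi> (cstar s2 * s2 * a) / \<phi> (cstar s2 * s2))"
  have K1: "\<psi>1 \<in> KMS_states \<sigma> \<beta>" unfolding \<psi>1_def
    by (rule kms_weight[OF phiK]) (use s1 g1 t in auto)
  have K2: "\<psi>2 \<in> KMS_states \<sigma> \<beta>" unfolding \<psi>2_def
    by (rule kms_weight[OF phiK]) (use s2 g2 t in auto)
  have p1: "\<psi>1 a = (\<phi> a + \<phi> (h * a)) / of_real (2 * t)" for a
    unfolding \<psi>1_def g1 using s1 by (simp add: distrib_right st_add[OF st])
  have p2: "\<psi>2 a = (\<phi> a - \<phi> (h * a)) / of_real (2 * (1 - t))" for a
    unfolding \<psi>2_def g2 using s2 by (simp add: left_diff_distrib st_diff[OF st])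
  have dec: "\<phi> = (\<lambda>a. complex_of_real t * \<psi>1 a + complex_of_real (1 - t) * \<psi>2 a)"
  proof
    fix a
    have n1: "complex_of_real (2 * t) \<noteq> 0" "complex_of_real (2 * (1 - t)) \<noteq> 0" using t by auto
    have "complex_of_real t * \<psi>1 a = (\<phi> a + \<phi> (h * a)) / 2"
      unfolding p1 using n1 by (simp add: divide_simps)
    moreover have "complex_of_real (1 - t) * \<psi>2 a = (\<phi> a - \<phi> (h * a)) / 2"
      unfolding p2 using n1 by (simp add: divide_simps)
    ultimately have "complex_of_real t * \<psi>1 a + complex_of_real (1 - t) * \<psi>2 a
       = (\<phi> a + \<phi> (h * a)) / 2 + (\<phi> a - \<phi> (h * a)) / 2" by (simp only:)
    also have "\<dots> = \<phi> a" by (simp add: field_simps)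
    finally show "\<phi> a = complex_of_real t * \<psi>1 a + complex_of_real (1 - t) * \<psi>2 a" by simp
  qed
  have "\<psi>1 = \<psi>2" using ext K1 K2 t dec unfolding Ext_def by blast
  hence "\<phi> a = complex_of_real t * \<psi>1 a + complex_of_real (1 - t) * \<psi>1 a"
    using fun_cong[OF dec, of a] by simp
  also have "\<dots> = (complex_of_real t + complex_of_real (1 - t)) * \<psi>1 a"
    by (simp only: distrib_right)
  also have "complex_of_real t + complex_of_real (1 - t) = 1"
    by (simp flip: of_real_add)
  finally have "\<phi> a = \<psi>1 a" by simp
  hence "\<phi> a * of_real (2 * t) = \<phi> a + \<phi> (h * a)" unfolding p1 using t
    by (simp add: divide_simps)
  hence "\<phi> (h * a) = \<phi> a * of_real (2 * t) - \<phi> a" by (simp add: algebra_simps)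
  moreover have "of_real (2 * t) = 1 + \<phi> h" using hr by (simp add: t_def complex_eq_iff)
  ultimately have "\<phi> (h * a) = \<phi> a * (1 + \<phi> h) - \<phi> a" by (simp only:)
  thus ?thesis by (simp add: algebra_simps)
qed

lemma ext_mult_selfadj:
  fixes h :: "'a::cstar_algebra_1"
  assumes ext: "\<phi> \<in> Ext (KMS_states \<sigma> \<beta>)" and h: "h \<in> center" "cstar h = h"
  shows "\<phi> (h * a) = \<phi> h * \<phi> a"
proof -
  have st: "is_state \<phi>" using ext unfolding Ext_def by (auto intro: KMS_state)
  show ?thesis
  proof (cases "h = 0")
    case True thus ?thesis using st_zero[OF st] by simp
  next
    case False
    define h' where "h' = (1 / (2 * norm h)) *\<^sub>R h"
    have "h' \<in> center" "cstar h' = h'" "norm h' < 1"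
      using h False by (simp_all add: h'_def center_scaleR cstar_scaleR)
    from ext_mult_small[OF ext this] have "\<phi> (h' * a) = \<phi> h' * \<phi> a" .
    hence "of_real (1 / (2 * norm h)) * \<phi> (h * a) = of_real (1 / (2 * norm h)) * \<phi> h * \<phi> a"
      by (simp add: h'_def st_scaleR[OF st])
    thus ?thesis using False by simp
  qed
qed

lemma subalg_cscale: "unital_cstar_subalgebra C \<Longrightarrow> a \<in> C \<Longrightarrow> cscale c a \<in> C"
  by (simp add: unital_cstar_subalgebra_def)
lemma subalg_add: "unital_cstar_subalgebra C \<Longrightarrow> a \<in> C \<Longrightarrow> b \<in> C \<Longrightarrow> a + b \<in> C"
  by (simp add: unital_cstar_subalgebra_def)
lemma subalg_mult: "unital_cstar_subalgebra C \<Longrightarrow> a \<in> C \<Longrightarrow> b \<in> C \<Longrightarrow> a * b \<in> C"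
  by (simp add: unital_cstar_subalgebra_def)
lemma subalg_cstar: "unital_cstar_subalgebra C \<Longrightarrow> a \<in> C \<Longrightarrow> cstar a \<in> C"
  by (simp add: unital_cstar_subalgebra_def)
lemma subalg_one: "unital_cstar_subalgebra C \<Longrightarrow> 1 \<in> C"
  by (simp add: unital_cstar_subalgebra_def)
lemma subalg_closed: "unital_cstar_subalgebra C \<Longrightarrow> closed C"
  by (simp add: unital_cstar_subalgebra_def)
lemma subalg_scaleR: "unital_cstar_subalgebra C \<Longrightarrow> a \<in> C \<Longrightarrow> r *\<^sub>R a \<in> C"
  using subalg_cscale[of C a "of_real r"] by (simp add: cscale_of_real)
lemma subalg_minus: "unital_cstar_subalgebra C \<Longrightarrow> a \<in> C \<Longrightarrow> - a \<in> C"
  using subalg_scaleR[of C a "-1"] by simp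
lemma subalg_diff: "unital_cstar_subalgebra C \<Longrightarrow> a \<in> C \<Longrightarrow> b \<in> C \<Longrightarrow> a - b \<in> C"
  using subalg_add[of C a "-b"] subalg_minus[of C b] by simp
lemma subalg_zero: "unital_cstar_subalgebra C \<Longrightarrow> 0 \<in> C"
  using subalg_scaleR[of C 1 0] subalg_one[of C] by simp

lemma ext_mult:
  fixes c :: "'a::cstar_algebra_1"
  assumes ext: "\<phi> \<in> Ext (KMS_states \<sigma> \<beta>)" and C: "unital_cstar_subalgebra C" "C \<subseteq> center"
    and c: "c \<in> C"
  shows "\<phi> (c * a) = \<phi> c * \<phi> a"
proof -
  have st: "is_state \<phi>" using ext unfolding Ext_def by (auto intro: KMS_state)
  define h where "h = (1/2::real) *\<^sub>R (c + cstar c)"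
  define k where "k = cscale (- \<i> / 2) (c - cstar c)"
  have d: "c = h + cscale \<i> k" "cstar h = h" "cstar k = k"
    using selfadj_decomp[of c] by (simp_all add: h_def k_def)
  have "h \<in> C" "k \<in> C" unfolding h_def k_def
    using c C(1) by (auto intro!: subalg_scaleR subalg_cscale subalg_add subalg_diff subalg_cstar)
  hence hk: "h \<in> center" "k \<in> center" using C(2) by auto
  have "\<phi> (c * a) = \<phi> (h * a) + \<i> * \<phi> (k * a)"
    by (subst d(1)) (simp add: distrib_right cscale_mult_left st_add[OF st] st_cscale[OF st])
  also have "\<dots> = (\<phi> h + \<i> * \<phi> k) * \<phi> a"
    using ext_mult_selfadj[OF ext hk(1) d(2)] ext_mult_selfadj[OF ext hk(2) d(3)]
    by (simp add: algebra_simps)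
  also have "\<phi> h + \<i> * \<phi> k = \<phi> c"
  proof -
    have "\<phi> c = \<phi> (h + cscale \<i> k)" by (rule arg_cong[OF d(1)])
    thus ?thesis by (simp add: st_add[OF st] st_cscale[OF st])
  qed
  finally show ?thesis .
qed



lemma om_add: "x \<in> Omega C \<Longrightarrow> a \<in> C \<Longrightarrow> b \<in> C \<Longrightarrow> x (a + b) = x a + x b"
  by (simp add: Omega_def)
lemma om_mult: "x \<in> Omega C \<Longrightarrow> a \<in> C \<Longrightarrow> b \<in> C \<Longrightarrow> x (a * b) = x a * x b"
  by (simp add: Omega_def)
lemma om_cscale: "x \<in> Omega C \<Longrightarrow> a \<in> C \<Longrightarrow> x (cscale c a) = c * x a"
  by (simp add: Omega_def)
lemma om_one: "x \<in> Omega C \<Longrightarrow> x 1 = 1"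
  by (simp add: Omega_def)
lemma om_out: "x \<in> Omega C \<Longrightarrow> a \<notin> C \<Longrightarrow> x a = 0"
  by (simp add: Omega_def)

lemma Ext_sub: "Ext K \<subseteq> K" by (auto simp: Ext_def)

lemma ExtD:
  assumes "\<phi> \<in> Ext K" "\<psi>1 \<in> K" "\<psi>2 \<in> K" "0 < t" "t < 1"
    "\<phi> = (\<lambda>a. complex_of_real t * \<psi>1 a + complex_of_real (1 - t) * \<psi>2 a)"
  shows "\<psi>1 = \<psi>2"
proof -
  have "\<forall>\<psi>1\<in>K. \<forall>\<psi>2\<in>K. \<forall>t::real. 0 < t \<and> t < 1 \<and>
      \<phi> = (\<lambda>a. complex_of_real t * \<psi>1 a + complex_of_real (1 - t) * \<psi>2 a) \<longrightarrow> \<psi>1 = \<psi>2"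
    using assms(1) by (simp add: Ext_def)
  hence "0 < t \<and> t < 1 \<and> \<phi> = (\<lambda>a. complex_of_real t * \<psi>1 a + complex_of_real (1 - t) * \<psi>2 a) \<longrightarrow> \<psi>1 = \<psi>2"
    using assms(2,3) by blast
  thus ?thesis using assms(4-6) by blast
qed

lemma ExtI:
  assumes "\<phi> \<in> K" "\<And>\<psi>1 \<psi>2 t. \<psi>1 \<in> K \<Longrightarrow> \<psi>2 \<in> K \<Longrightarrow> 0 < t \<Longrightarrow> t < 1 \<Longrightarrow>
    \<phi> = (\<lambda>a. complex_of_real t * \<psi>1 a + complex_of_real (1 - t) * \<psi>2 a) \<Longrightarrow> \<psi>1 = \<psi>2"
  shows "\<phi> \<in> Ext K"
  using assms unfolding Ext_def by auto

lemma KMS_at_sub: "KMS_states_at \<sigma> \<beta> C x \<subseteq> KMS_states \<sigma> \<beta>"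
  by (auto simp: KMS_states_at_def)

lemma part1:
  fixes \<sigma> :: "real \<Rightarrow> 'a::cstar_algebra_1 \<Rightarrow> 'a"
  assumes C: "unital_cstar_subalgebra C" "C \<subseteq> center"
    and ext: "\<phi> \<in> Ext (KMS_states \<sigma> \<beta>)"
  shows "\<exists>x\<in>Omega C. \<phi> \<in> Ext (KMS_states_at \<sigma> \<beta> C x)"
proof -
  have phiK: "\<phi> \<in> KMS_states \<sigma> \<beta>" using ext by (simp add: Ext_def)
  have st: "is_state \<phi>" using phiK by (rule KMS_state)
  define x where "x = (\<lambda>a. if a \<in> C then \<phi> a else 0)"
  have xO: "x \<in> Omega C" unfolding Omega_def
  proof (intro CollectI conjI ballI allI impI)
    fix a b assume "a \<in> C" "b \<in> C"
    thus "x (a + b) = x a + x b" "x (a * b) = x a * x b"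
      using ext_mult[OF ext C] C(1)
      by (simp_all add: x_def subalg_add subalg_mult st_add[OF st])
  next
    fix c a assume "a \<in> C" thus "x (cscale c a) = c * x a"
      using C(1) by (simp add: x_def subalg_cscale st_cscale[OF st])
  next
    show "x 1 = 1" using C(1) by (simp add: x_def subalg_one st_one[OF st])
  next
    fix a assume "a \<notin> C" thus "x a = 0" by (simp add: x_def)
  qed
  have "\<phi> \<in> KMS_states_at \<sigma> \<beta> C x"
    unfolding KMS_states_at_def J_ideal_def using phiK by (auto simp: x_def)
  hence "\<phi> \<in> Ext (KMS_states_at \<sigma> \<beta> C x)"
  proof (rule ExtI)
    fix \<psi>1 \<psi>2 t assume "\<psi>1 \<in> KMS_states_at \<sigma> \<beta> C x" "\<psi>2 \<in> KMS_states_at \<sigma> \<beta> C x"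
      "0 < t" "t < 1" "\<phi> = (\<lambda>a. complex_of_real t * \<psi>1 a + complex_of_real (1 - t) * \<psi>2 a)"
    thus "\<psi>1 = \<psi>2" using ExtD[OF ext] KMS_at_sub[of \<sigma> \<beta> C x] by blast
  qed
  with xO show ?thesis by blast
qed

lemma part2:
  fixes \<sigma> :: "real \<Rightarrow> 'a::cstar_algebra_1 \<Rightarrow> 'a"
  assumes C: "unital_cstar_subalgebra C"
    and x: "x \<in> Omega C" and ext: "\<phi> \<in> Ext (KMS_states_at \<sigma> \<beta> C x)"
  shows "\<phi> \<in> Ext (KMS_states \<sigma> \<beta>)"
proof -
  have phiKx: "\<phi> \<in> KMS_states_at \<sigma> \<beta> C x" using ext by (simp add: Ext_def)
  have phiK: "\<phi> \<in> KMS_states \<sigma> \<beta>" using phiKx KMS_at_sub by blast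
  have inKx: "\<psi> \<in> KMS_states_at \<sigma> \<beta> C x"
    if \<psi>: "\<psi> \<in> KMS_states \<sigma> \<beta>" and \<psi>': "\<psi>' \<in> KMS_states \<sigma> \<beta>" and t: "0 < t" "t < 1"
      and dec: "\<phi> = (\<lambda>a. complex_of_real t * \<psi> a + complex_of_real (1 - t) * \<psi>' a)"
    for \<psi> \<psi>' t
  proof -
    have s\<psi>: "is_state \<psi>" and s\<psi>': "is_state \<psi>'" using \<psi> \<psi>' by (auto intro: KMS_state)
    have "\<psi> a = 0" if a: "a \<in> J_ideal C x" for a
    proof -
      have aC: "a \<in> C" and xa: "x a = 0" using a by (auto simp: J_ideal_def)
      have "cstar a * a \<in> J_ideal C x"
        using aC xa C by (simp add: J_ideal_def subalg_mult subalg_cstar om_mult[OF x])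
      hence "\<phi> (cstar a * a) = 0" using phiKx by (simp add: KMS_states_at_def)
      hence "Re (complex_of_real t * \<psi> (cstar a * a) + complex_of_real (1 - t) * \<psi>' (cstar a * a)) = 0"
        using fun_cong[OF dec, of "cstar a * a"] by (simp only: zero_complex.sel)
      hence sum0: "t * Re (\<psi> (cstar a * a)) + (1 - t) * Re (\<psi>' (cstar a * a)) = 0"
        by simp
      have p0: "Re (\<psi> (cstar a * a)) \<ge> 0" "Re (\<psi>' (cstar a * a)) \<ge> 0"
        using st_pos_Re[OF s\<psi>] st_pos_Re[OF s\<psi>'] by auto
      have "Re (\<psi> (cstar a * a)) = 0"
      proof -
        have "t * Re (\<psi> (cstar a * a)) \<ge> 0" "(1 - t) * Re (\<psi>' (cstar a * a)) \<ge> 0"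
          using p0 t by auto
        hence "t * Re (\<psi> (cstar a * a)) = 0" using sum0 by linarith
        thus ?thesis using t by simp
      qed
      hence "cmod (\<psi> a) ^ 2 \<le> 0" using st_CS[OF s\<psi>, of a] by simp
      thus ?thesis by simp
    qed
    thus ?thesis using \<psi> by (simp add: KMS_states_at_def)
  qed
  show ?thesis
  proof (rule ExtI[OF phiK])
    fix \<psi>1 \<psi>2 t
    assume h0: "\<psi>1 \<in> KMS_states \<sigma> \<beta>" "\<psi>2 \<in> KMS_states \<sigma> \<beta>" "0 < t" "t < 1"
      "\<phi> = (\<lambda>a. complex_of_real t * \<psi>1 a + complex_of_real (1 - t) * \<psi>2 a)"
    have h: "\<psi>1 \<in> KMS_states \<sigma> \<beta>" "\<psi>2 \<in> KMS_states \<sigma> \<beta>"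
      "0 < t \<and> t < 1 \<and> \<phi> = (\<lambda>a. complex_of_real t * \<psi>1 a + complex_of_real (1 - t) * \<psi>2 a)"
      using h0 by auto
    have "\<psi>1 \<in> KMS_states_at \<sigma> \<beta> C x" using inKx[OF h(1) h(2) h0(3) h0(4) h0(5)] .
    moreover have "\<psi>2 \<in> KMS_states_at \<sigma> \<beta> C x"
    proof (rule inKx[OF h(2) h(1), of "1 - t"])
      show "0 < 1 - t" "1 - t < 1" using h(3) by auto
      show "\<phi> = (\<lambda>a. complex_of_real (1 - t) * \<psi>2 a + complex_of_real (1 - (1 - t)) * \<psi>1 a)"
        using h(3) by (simp add: add.commute)
    qed
    ultimately show "\<psi>1 = \<psi>2" using ExtD[OF ext _ _ h0(3) h0(4) h0(5)] by blast
  qed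
qed

lemma om_shift:
  assumes C: "unital_cstar_subalgebra C" and x: "x \<in> Omega C" and c: "c \<in> C"
  shows "c + cscale (- x c) 1 \<in> J_ideal C x"
proof -
  have "cscale (- x c) 1 \<in> C" using C by (simp add: subalg_cscale subalg_one)
  hence "x (c + cscale (- x c) 1) = x c + (- x c) * x 1"
    using om_add[OF x c] om_cscale[OF x subalg_one[OF C]] by simp
  thus ?thesis using om_one[OF x] C c \<open>cscale (- x c) 1 \<in> C\<close>
    by (simp add: J_ideal_def subalg_add)
qed

lemma KMS_at_unique:
  assumes C: "unital_cstar_subalgebra C" and x: "x \<in> Omega C" and y: "y \<in> Omega C"
    and \<phi>: "\<phi> \<in> KMS_states_at \<sigma> \<beta> C x" "\<phi> \<in> KMS_states_at \<sigma> \<beta> C y"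
  shows "x = y"
proof
  fix c
  have st: "is_state \<phi>" using \<phi>(1) by (auto simp: KMS_states_at_def intro: KMS_state)
  show "x c = y c"
  proof (cases "c \<in> C")
    case True
    have "\<phi> (c + cscale (- x c) 1) = 0" using om_shift[OF C x True] \<phi>(1)
      by (simp add: KMS_states_at_def)
    hence "\<phi> c = x c" by (simp add: st_add[OF st] st_cscale[OF st] st_one[OF st])
    moreover have "\<phi> (c + cscale (- y c) 1) = 0" using om_shift[OF C y True] \<phi>(2)
      by (simp add: KMS_states_at_def)
    hence "\<phi> c = y c" by (simp add: st_add[OF st] st_cscale[OF st] st_one[OF st])
    ultimately show ?thesis by simp
  next
    case False thus ?thesis using om_out[OF x] om_out[OF y] by simp
  qed
qed

lemma parts12:
  fixes \<sigma> :: "real \<Rightarrow> 'a::cstar_algebra_1 \<Rightarrow> 'a"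
  assumes C: "unital_cstar_subalgebra C" "C \<subseteq> center"
  shows "Ext (KMS_states \<sigma> \<beta>) = (\<Union>x\<in>Omega C. Ext (KMS_states_at \<sigma> \<beta> C x))"
    "disjoint_family_on (\<lambda>x. Ext (KMS_states_at \<sigma> \<beta> C x)) (Omega C)"
proof -
  show "Ext (KMS_states \<sigma> \<beta>) = (\<Union>x\<in>Omega C. Ext (KMS_states_at \<sigma> \<beta> C x))"
  proof (rule set_eqI)
    fix \<phi> show "\<phi> \<in> Ext (KMS_states \<sigma> \<beta>) \<longleftrightarrow> \<phi> \<in> (\<Union>x\<in>Omega C. Ext (KMS_states_at \<sigma> \<beta> C x))"
    proof
      assume "\<phi> \<in> Ext (KMS_states \<sigma> \<beta>)"
      then obtain x where "x \<in> Omega C" "\<phi> \<in> Ext (KMS_states_at \<sigma> \<beta> C x)" using part1[OF C] by blast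
      thus "\<phi> \<in> (\<Union>x\<in>Omega C. Ext (KMS_states_at \<sigma> \<beta> C x))" by blast
    next
      assume "\<phi> \<in> (\<Union>x\<in>Omega C. Ext (KMS_states_at \<sigma> \<beta> C x))"
      then obtain x where "x \<in> Omega C" "\<phi> \<in> Ext (KMS_states_at \<sigma> \<beta> C x)" by (rule UN_E)
      thus "\<phi> \<in> Ext (KMS_states \<sigma> \<beta>)" using part2[OF C(1)] by blast
    qed
  qed
  show "disjoint_family_on (\<lambda>x. Ext (KMS_states_at \<sigma> \<beta> C x)) (Omega C)"
    unfolding disjoint_family_on_def
  proof (intro ballI impI)
    fix x y assume xy: "x \<in> Omega C" "y \<in> Omega C" "x \<noteq> y"
    show "Ext (KMS_states_at \<sigma> \<beta> C x) \<inter> Ext (KMS_states_at \<sigma> \<beta> C y) = {}"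
    proof (rule ccontr)
      assume "Ext (KMS_states_at \<sigma> \<beta> C x) \<inter> Ext (KMS_states_at \<sigma> \<beta> C y) \<noteq> {}"
      then obtain \<phi> where "\<phi> \<in> KMS_states_at \<sigma> \<beta> C x" "\<phi> \<in> KMS_states_at \<sigma> \<beta> C y"
        using Ext_sub by blast
      thus False using KMS_at_unique[OF C(1) xy(1,2)] xy(3) by blast
    qed
  qed
qed



lemma cont_coord: "continuous_on S (\<lambda>f. f i :: 'b::topological_space)"
  by (rule continuous_on_subset[OF continuous_on_product_coordinates]) simp

lemma cl1: "closed {\<phi>::'a\<Rightarrow>complex. \<phi> u = \<phi> v + \<phi> w}"
  by (rule closed_Collect_eq; intro cont_coord continuous_on_add)
lemma cl2: "closed {\<phi>::'a\<Rightarrow>complex. \<phi> u = c * \<phi> v}"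
  by (rule closed_Collect_eq; intro cont_coord continuous_on_mult continuous_on_const)
lemma cl3: "closed {\<phi>::'a\<Rightarrow>complex. Im (\<phi> u) = 0}"
  by (rule closed_Collect_eq; intro cont_coord continuous_on_Im continuous_on_const)
lemma cl4: "closed {\<phi>::'a\<Rightarrow>complex. 0 \<le> Re (\<phi> u)}"
  by (rule closed_Collect_le; intro cont_coord continuous_on_Re continuous_on_const)
lemma cl5: "closed {\<phi>::'a\<Rightarrow>complex. \<phi> u = c}"
  by (rule closed_Collect_eq; intro cont_coord continuous_on_const)
lemma cl6: "closed {\<phi>::'a\<Rightarrow>complex. \<phi> u = \<phi> v}"
  by (rule closed_Collect_eq; intro cont_coord)

lemma closed_KMS: "closed (KMS_states (\<sigma> :: real \<Rightarrow> 'a::cstar_algebra_1 \<Rightarrow> 'a) \<beta>)"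
  unfolding KMS_states_def is_state_def
  by (intro closed_Collect_conj closed_Collect_all closed_Collect_imp open_Collect_const cl1 cl2 cl3 cl4 cl5 cl6)

lemma closed_KMS_at: "closed (KMS_states_at (\<sigma> :: real \<Rightarrow> 'a::cstar_algebra_1 \<Rightarrow> 'a) \<beta> C x)"
proof -
  have "KMS_states_at \<sigma> \<beta> C x = KMS_states \<sigma> \<beta> \<inter> {\<phi>. \<forall>a. a \<in> J_ideal C x \<longrightarrow> \<phi> a = 0}"
    by (auto simp: KMS_states_at_def)
  also have "closed \<dots>"
    by (intro closed_Int closed_KMS closed_Collect_all closed_Collect_imp open_Collect_const cl5)
  finally show ?thesis .
qed

lemma compact_box: "compact (PiE UNIV (\<lambda>a::'a. cball (0::complex) (2 * norm (a::'a::real_normed_vector))))"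
proof -
  have "compactin (product_topology (\<lambda>i. euclidean) UNIV)
      (PiE UNIV (\<lambda>a::'a. cball (0::complex) (2 * norm a)))"
    by (subst compactin_PiE) auto
  thus ?thesis by (simp add: euclidean_product_topology)
qed

lemma KMS_in_box: "KMS_states (\<sigma> :: real \<Rightarrow> 'a::cstar_algebra_1 \<Rightarrow> 'a) \<beta>
   \<subseteq> PiE UNIV (\<lambda>a::'a. cball (0::complex) (2 * norm a))"
proof
  fix \<phi> assume "\<phi> \<in> KMS_states \<sigma> \<beta>"
  hence "is_state \<phi>" by (rule KMS_state)
  hence "\<forall>a. \<phi> a \<in> cball 0 (2 * norm a)" using st_bound[of \<phi>] by (simp add: dist_norm)
  thus "\<phi> \<in> PiE UNIV (\<lambda>a::'a. cball (0::complex) (2 * norm a))" by (simp add: PiE_iff)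
qed

lemma compact_KMS: "compact (KMS_states (\<sigma> :: real \<Rightarrow> 'a::cstar_algebra_1 \<Rightarrow> 'a) \<beta>)"
proof -
  have "KMS_states \<sigma> \<beta> = PiE UNIV (\<lambda>a::'a. cball (0::complex) (2 * norm a)) \<inter> KMS_states \<sigma> \<beta>"
    using KMS_in_box by blast
  also have "compact \<dots>" by (rule compact_Int_closed[OF compact_box closed_KMS])
  finally show ?thesis .
qed

lemma compact_KMS_at: "compact (KMS_states_at (\<sigma> :: real \<Rightarrow> 'a::cstar_algebra_1 \<Rightarrow> 'a) \<beta> C x)"
proof -
  have "KMS_states_at \<sigma> \<beta> C x = KMS_states \<sigma> \<beta> \<inter> KMS_states_at \<sigma> \<beta> C x"
    using KMS_at_sub by blast
  also have "compact \<dots>" by (rule compact_Int_closed[OF compact_KMS closed_KMS_at])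
  finally show ?thesis .
qed



definition face :: "('a \<Rightarrow> complex) set \<Rightarrow> ('a \<Rightarrow> complex) set \<Rightarrow> bool" where
  "face K F \<longleftrightarrow> F \<subseteq> K \<and> F \<noteq> {} \<and> closed F \<and>
    (\<forall>\<psi>1\<in>K. \<forall>\<psi>2\<in>K. \<forall>t::real. 0 < t \<and> t < 1 \<and>
       (\<lambda>a. complex_of_real t * \<psi>1 a + complex_of_real (1 - t) * \<psi>2 a) \<in> F \<longrightarrow> \<psi>1 \<in> F \<and> \<psi>2 \<in> F)"

lemma face_D: "face K F \<Longrightarrow> \<psi>1 \<in> K \<Longrightarrow> \<psi>2 \<in> K \<Longrightarrow> 0 < t \<Longrightarrow> t < 1 \<Longrightarrow>
   (\<lambda>a. complex_of_real t * \<psi>1 a + complex_of_real (1 - t) * \<psi>2 a) \<in> F \<Longrightarrow> \<psi>1 \<in> F \<and> \<psi>2 \<in> F"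
  unfolding face_def by blast

lemma finite_chain_min:
  assumes "finite \<F>" "\<F> \<noteq> {}" "\<And>X Y. X \<in> \<F> \<Longrightarrow> Y \<in> \<F> \<Longrightarrow> X \<subseteq> Y \<or> Y \<subseteq> X"
  shows "\<exists>M\<in>\<F>. \<forall>X\<in>\<F>. M \<subseteq> X"
  using assms
proof (induction \<F> rule: finite_ne_induct)
  case (singleton x) thus ?case by auto
next
  case (insert x F)
  then obtain M where M: "M \<in> F" "\<forall>X\<in>F. M \<subseteq> X" by blast
  have "x \<subseteq> M \<or> M \<subseteq> x" using insert.prems M(1) by blast
  thus ?case using M by blast
qed

lemma face_Inter:
  fixes K :: "('a \<Rightarrow> complex) set"
  assumes K: "compact K" and ch: "\<C> \<noteq> {}" "\<And>F. F \<in> \<C> \<Longrightarrow> face K F"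
    "\<And>X Y. X \<in> \<C> \<Longrightarrow> Y \<in> \<C> \<Longrightarrow> X \<subseteq> Y \<or> Y \<subseteq> X"
  shows "face K (\<Inter>\<C>)"
proof -
  have sub: "\<Inter>\<C> \<subseteq> K" using ch(1,2) unfolding face_def by blast
  have cl: "closed (\<Inter>\<C>)" using ch(2) unfolding face_def by blast
  have ne: "K \<inter> \<Inter>\<C> \<noteq> {}"
  proof (rule compact_imp_fip[OF K])
    show "closed T" if "T \<in> \<C>" for T using ch(2)[OF that] unfolding face_def by blast
  next
    fix F' assume F': "finite F'" "F' \<subseteq> \<C>"
    show "K \<inter> \<Inter>F' \<noteq> {}"
    proof (cases "F' = {}")
      case True
      obtain F where "F \<in> \<C>" using ch(1) by blast
      hence "F \<subseteq> K" "F \<noteq> {}" using ch(2) unfolding face_def by auto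
      thus ?thesis using True by auto
    next
      case False
      obtain M where M: "M \<in> F'" "\<forall>X\<in>F'. M \<subseteq> X"
        using finite_chain_min[OF F'(1) False] ch(3) F'(2) by blast
      have fM: "face K M" using ch(2) M(1) F'(2) by blast
      hence "M \<subseteq> K" "M \<noteq> {}" unfolding face_def by auto
      moreover have "M \<subseteq> \<Inter>F'" using M by blast
      ultimately show ?thesis by blast
    qed
  qed
  show ?thesis unfolding face_def
  proof (intro conjI sub cl ballI allI impI)
    show "\<Inter>\<C> \<noteq> {}" using ne by blast
  next
    fix \<psi>1 \<psi>2 t assume h: "\<psi>1 \<in> K" "\<psi>2 \<in> K"
      "0 < t \<and> t < 1 \<and> (\<lambda>a. complex_of_real t * \<psi>1 a + complex_of_real (1 - t) * \<psi>2 a) \<in> \<Inter>\<C>"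
    have "\<psi>1 \<in> F \<and> \<psi>2 \<in> F" if "F \<in> \<C>" for F
      using face_D[OF ch(2)[OF that] h(1,2)] h(3) that by blast
    thus "\<psi>1 \<in> \<Inter>\<C>" "\<psi>2 \<in> \<Inter>\<C>" by auto
  qed
qed

lemma minimal_face:
  fixes K :: "('a \<Rightarrow> complex) set"
  assumes K: "compact K" "K \<noteq> {}" "closed K"
  shows "\<exists>F0. face K F0 \<and> (\<forall>F. face K F \<and> F \<subseteq> F0 \<longrightarrow> F = F0)"
proof -
  define A where "A = uminus ` {F. face K F}"
  have faceK: "face K K" using K unfolding face_def by blast
  have "\<forall>C\<in>chains A. \<exists>U\<in>A. \<forall>X\<in>C. X \<subseteq> U"
  proof
    fix C assume C: "C \<in> chains A"
    show "\<exists>U\<in>A. \<forall>X\<in>C. X \<subseteq> U"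
    proof (cases "C = {}")
      case True thus ?thesis using faceK unfolding A_def by blast
    next
      case False
      define \<C> where "\<C> = uminus ` C"
      have Csub: "C \<subseteq> A" using C by (simp add: chains_def)
      have fc: "face K F" if "F \<in> \<C>" for F
        using that Csub unfolding \<C>_def A_def by auto
      have chc: "X \<subseteq> Y \<or> Y \<subseteq> X" if "X \<in> \<C>" "Y \<in> \<C>" for X Y
        using that chainsD[OF C] unfolding \<C>_def by blast
      have "face K (\<Inter>\<C>)" by (rule face_Inter[OF K(1)]) (use False fc chc in \<open>auto simp: \<C>_def\<close>)
      hence "- \<Inter>\<C> \<in> A" unfolding A_def by blast
      moreover have "\<forall>X\<in>C. X \<subseteq> - \<Inter>\<C>" unfolding \<C>_def by auto
      ultimately show ?thesis by blast
    qed
  qed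
  from Zorn_Lemma2[OF this] obtain M where M: "M \<in> A" "\<forall>X\<in>A. M \<subseteq> X \<longrightarrow> X = M" by blast
  then obtain F0 where F0: "face K F0" "M = - F0" unfolding A_def by blast
  have "F = F0" if "face K F" "F \<subseteq> F0" for F
  proof -
    have "- F \<in> A" using that(1) unfolding A_def by blast
    moreover have "M \<subseteq> - F" using that(2) F0(2) by blast
    ultimately have "- F = M" using M(2) by blast
    thus ?thesis using F0(2) by (metis double_complement)
  qed
  thus ?thesis using F0(1) by blast
qed

lemma face_level:
  fixes K :: "('a \<Rightarrow> complex) set"
  assumes F: "face K F" and K: "compact K"
  shows "\<exists>m. face K {\<psi>\<in>F. Re (c * \<psi> a) = m} \<and> (\<forall>\<psi>\<in>F. Re (c * \<psi> a) \<le> m)"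
proof -
  have Fsub: "F \<subseteq> K" and Fne: "F \<noteq> {}" and Fcl: "closed F" using F unfolding face_def by auto
  have "compact (K \<inter> F)" by (rule compact_Int_closed[OF K Fcl])
  moreover have "K \<inter> F = F" using Fsub by blast
  ultimately have cF: "compact F" by simp
  have contL: "continuous_on UNIV (\<lambda>\<psi>::'a\<Rightarrow>complex. Re (c * \<psi> a))"
    by (intro continuous_on_Re continuous_on_mult continuous_on_const cont_coord)
  obtain \<psi>0 where \<psi>0: "\<psi>0 \<in> F" "\<forall>\<psi>\<in>F. Re (c * \<psi> a) \<le> Re (c * \<psi>0 a)"
    using continuous_attains_sup[OF cF Fne continuous_on_subset[OF contL]] by blast
  define m where "m = Re (c * \<psi>0 a)"
  have "face K {\<psi>\<in>F. Re (c * \<psi> a) = m}" unfolding face_def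
  proof (intro conjI ballI allI impI)
    show "{\<psi> \<in> F. Re (c * \<psi> a) = m} \<subseteq> K" using Fsub by blast
    show "{\<psi> \<in> F. Re (c * \<psi> a) = m} \<noteq> {}" using \<psi>0 m_def by blast
    have "{\<psi> \<in> F. Re (c * \<psi> a) = m} = F \<inter> {\<psi>. Re (c * \<psi> a) = m}" by blast
    moreover have "closed {\<psi>::'a\<Rightarrow>complex. Re (c * \<psi> a) = m}"
      by (rule closed_Collect_eq[OF contL continuous_on_const])
    ultimately show "closed {\<psi> \<in> F. Re (c * \<psi> a) = m}" using Fcl by auto
  next
    fix \<psi>1 \<psi>2 t assume h: "\<psi>1 \<in> K" "\<psi>2 \<in> K"
      "0 < t \<and> t < 1 \<and> (\<lambda>a. complex_of_real t * \<psi>1 a + complex_of_real (1 - t) * \<psi>2 a)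
         \<in> {\<psi> \<in> F. Re (c * \<psi> a) = m}"
    have in12: "\<psi>1 \<in> F" "\<psi>2 \<in> F" using face_D[OF F h(1,2)] h(3) by auto
    have le: "Re (c * \<psi>1 a) \<le> m" "Re (c * \<psi>2 a) \<le> m" using \<psi>0(2) in12 m_def by auto
    have "Re (c * (complex_of_real t * \<psi>1 a + complex_of_real (1 - t) * \<psi>2 a)) = m"
      using h(3) by simp
    hence eq: "t * Re (c * \<psi>1 a) + (1 - t) * Re (c * \<psi>2 a) = m"
      by (simp add: algebra_simps)
    have t: "0 < t" "t < 1" using h(3) by auto
    have "t * Re (c * \<psi>1 a) \<le> t * m" "(1 - t) * Re (c * \<psi>2 a) \<le> (1 - t) * m"
      using le t by (auto intro: mult_left_mono)
    hence "t * Re (c * \<psi>1 a) = t * m" "(1 - t) * Re (c * \<psi>2 a) = (1 - t) * m"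
      using eq by (auto simp: algebra_simps)
    hence "Re (c * \<psi>1 a) = m" "Re (c * \<psi>2 a) = m" using t by auto
    thus "\<psi>1 \<in> {\<psi> \<in> F. Re (c * \<psi> a) = m}" "\<psi>2 \<in> {\<psi> \<in> F. Re (c * \<psi> a) = m}"
      using in12 by auto
  qed
  thus ?thesis using \<psi>0 m_def by blast
qed

lemma Ext_nonempty:
  fixes K :: "('a \<Rightarrow> complex) set"
  assumes K: "compact K" "K \<noteq> {}" "closed K"
  shows "Ext K \<noteq> {}"
proof -
  obtain F0 where F0: "face K F0" "\<And>F. face K F \<Longrightarrow> F \<subseteq> F0 \<Longrightarrow> F = F0"
    using minimal_face[OF K] by blast
  have single: "\<psi>1 = \<psi>2" if "\<psi>1 \<in> F0" "\<psi>2 \<in> F0" for \<psi>1 \<psi>2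
  proof (rule ccontr)
    assume "\<psi>1 \<noteq> \<psi>2"
    then obtain a where a: "\<psi>1 a \<noteq> \<psi>2 a" by blast
    obtain c where c: "Re (c * \<psi>1 a) \<noteq> Re (c * \<psi>2 a)"
    proof (cases "Re (\<psi>1 a) = Re (\<psi>2 a)")
      case True
      hence "Im (\<psi>1 a) \<noteq> Im (\<psi>2 a)" using a complex_eq_iff by blast
      hence "Re (- \<i> * \<psi>1 a) \<noteq> Re (- \<i> * \<psi>2 a)" by simp
      thus ?thesis using that by blast
    next
      case False
      hence "Re (1 * \<psi>1 a) \<noteq> Re (1 * \<psi>2 a)" by simp
      thus ?thesis using that by blast
    qed
    obtain m where m: "face K {\<psi>\<in>F0. Re (c * \<psi> a) = m}" "\<forall>\<psi>\<in>F0. Re (c * \<psi> a) \<le> m"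
      using face_level[OF F0(1) K(1)] by blast
    have "{\<psi>\<in>F0. Re (c * \<psi> a) = m} = F0" by (rule F0(2)[OF m(1)]) blast
    hence "Re (c * \<psi>1 a) = m" "Re (c * \<psi>2 a) = m" using that by blast+
    thus False using c by simp
  qed
  obtain \<phi>0 where \<phi>0: "\<phi>0 \<in> F0" using F0(1) unfolding face_def by blast
  have "\<phi>0 \<in> Ext K" unfolding Ext_def
  proof (intro CollectI conjI ballI allI impI)
    show "\<phi>0 \<in> K" using \<phi>0 F0(1) unfolding face_def by blast
  next
    fix \<psi>1 \<psi>2 t assume h: "\<psi>1 \<in> K" "\<psi>2 \<in> K"
      "0 < t \<and> t < 1 \<and> \<phi>0 = (\<lambda>a. complex_of_real t * \<psi>1 a + complex_of_real (1 - t) * \<psi>2 a)"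
    have "\<psi>1 \<in> F0 \<and> \<psi>2 \<in> F0" using face_D[OF F0(1) h(1,2)] h(3) \<phi>0 by auto
    thus "\<psi>1 = \<psi>2" using single by blast
  qed
  thus ?thesis by blast
qed



lemma om_zero: "unital_cstar_subalgebra C \<Longrightarrow> x \<in> Omega C \<Longrightarrow> x 0 = 0"
  using om_cscale[of x C 0 0] subalg_zero[of C] by simp

lemma om_diff: "unital_cstar_subalgebra C \<Longrightarrow> x \<in> Omega C \<Longrightarrow> a \<in> C \<Longrightarrow> b \<in> C \<Longrightarrow> x (a - b) = x a - x b"
  using om_add[of x C a "-b"] om_cscale[of x C b "-1"] subalg_minus[of C b]
  by (simp add: cscale_minus_left)

lemma om_scaleR: "x \<in> Omega C \<Longrightarrow> a \<in> C \<Longrightarrow> x (r *\<^sub>R a) = of_real r * x a"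
  using om_cscale[of x C a "of_real r"] by (simp add: cscale_of_real)

lemma om_power: "unital_cstar_subalgebra C \<Longrightarrow> x \<in> Omega C \<Longrightarrow> a \<in> C \<Longrightarrow> x (a ^ n) = x a ^ n"
proof (induction n)
  case 0 thus ?case by (simp add: om_one)
next
  case (Suc n)
  have "a ^ n \<in> C" by (induction n) (use Suc.prems in \<open>auto simp: subalg_one subalg_mult\<close>)
  thus ?case using Suc by (simp add: om_mult)
qed

lemma subalg_power: "unital_cstar_subalgebra C \<Longrightarrow> a \<in> C \<Longrightarrow> a ^ n \<in> C"
  by (induction n) (auto simp: subalg_one subalg_mult)

lemma neumann:
  fixes b :: "'a::{real_normed_algebra_1,banach}"
  assumes "norm b < 1"
  shows "summable (\<lambda>n. b ^ n)" "(1 - b) * (\<Sum>n. b ^ n) = 1"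
proof -
  have sg: "summable (\<lambda>n. norm b ^ n)" using assms by (intro summable_geometric) simp
  show s: "summable (\<lambda>n. b ^ n)"
    by (rule summable_comparison_test[OF _ sg]) (auto intro: norm_power_ineq)
  have lim: "(\<lambda>n. b ^ n) \<longlonglongrightarrow> 0" using assms by (rule LIMSEQ_power_zero)
  have "(\<lambda>n. b ^ n - b ^ Suc n) sums (b ^ 0 - 0)" by (rule telescope_sums'[OF lim])
  hence "(\<Sum>n. b ^ n - b ^ Suc n) = 1" by (simp add: sums_iff)
  moreover have "(1 - b) * (\<Sum>n. b ^ n) = (\<Sum>n. (1 - b) * b ^ n)"
    by (rule suminf_mult[symmetric, OF s])
  moreover have "(\<lambda>n. (1 - b) * b ^ n) = (\<lambda>n. b ^ n - b ^ Suc n)"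
    by (simp add: algebra_simps)
  ultimately show "(1 - b) * (\<Sum>n. b ^ n) = 1" by simp
qed

lemma closed_sum_in:
  fixes f :: "nat \<Rightarrow> 'a::real_normed_vector"
  assumes "summable f" "closed S" "\<And>n. (\<Sum>i<n. f i) \<in> S"
  shows "suminf f \<in> S"
  by (rule Lim_in_closed_set[OF assms(2) _ _ summable_LIMSEQ[OF assms(1)]]) (use assms(3) in auto)

lemma om_bound:
  fixes C :: "'a::cstar_algebra_1 set"
  assumes C: "unital_cstar_subalgebra C" and x: "x \<in> Omega C" and a: "a \<in> C"
  shows "cmod (x a) \<le> norm a"
proof (rule ccontr)
  assume "\<not> cmod (x a) \<le> norm a"
  hence lt: "norm a < cmod (x a)" by simp
  hence l0: "x a \<noteq> 0" by auto
  define b where "b = cscale (1 / x a) a"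
  have bC: "b \<in> C" using C a by (simp add: b_def subalg_cscale)
  have nb: "norm b < 1" using lt l0 by (simp add: b_def norm_cscale norm_divide field_simps)
  have xb: "x b = 1" using l0 by (simp add: b_def om_cscale[OF x a])
  define s where "s = (\<Sum>n. b ^ n)"
  have sC: "s \<in> C" unfolding s_def
  proof (rule closed_sum_in[OF neumann(1)[OF nb] subalg_closed[OF C]])
    fix n show "(\<Sum>i<n. b ^ i) \<in> C"
      by (induction n) (auto simp: subalg_zero[OF C] subalg_add[OF C] subalg_power[OF C bC])
  qed
  have "(1 - b) * s = 1" unfolding s_def by (rule neumann(2)[OF nb])
  hence "x ((1 - b) * s) = 1" using om_one[OF x] by simp
  moreover have "x ((1 - b) * s) = (x 1 - x b) * x s"
    using om_mult[OF x _ sC, of "1 - b"] om_diff[OF C x subalg_one[OF C] bC] C bC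
    by (simp add: subalg_diff subalg_one)
  ultimately show False using xb om_one[OF x] by simp
qed

lemma om_sqr:
  fixes C :: "'a::cstar_algebra_1 set"
  assumes C: "unital_cstar_subalgebra C" and x: "x \<in> Omega C" and u: "u \<in> C" "norm u \<le> 1"
    and xu: "x u = of_real \<tau>" and tau: "\<bar>\<tau>\<bar> \<le> 1"
  shows "x (sqr u) = of_real (sqr \<tau>)"
proof -
  define P where "P n = (\<Sum>i<n. sqc i *\<^sub>R u ^ i)" for n
  have PC: "P n \<in> C" for n unfolding P_def
    by (induction n) (auto simp: subalg_zero[OF C] subalg_add[OF C] subalg_scaleR[OF C] subalg_power[OF C u(1)])
  have sC: "sqr u \<in> C"
    unfolding sqr_def by (rule closed_sum_in[OF summable_sqr[OF u(2)] subalg_closed[OF C]]) (use PC P_def in auto)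
  have xP: "x (P n) = of_real (\<Sum>i<n. sqc i *\<^sub>R \<tau> ^ i)" for n
  proof (induction n)
    case 0 thus ?case using om_zero[OF C x] by (simp add: P_def)
  next
    case (Suc n)
    have "x (P (Suc n)) = x (P n) + x (sqc n *\<^sub>R u ^ n)"
      using om_add[OF x PC] subalg_scaleR[OF C subalg_power[OF C u(1)]] by (simp add: P_def)
    also have "x (sqc n *\<^sub>R u ^ n) = of_real (sqc n) * (of_real \<tau>) ^ n"
      using om_scaleR[OF x subalg_power[OF C u(1)]] om_power[OF C x u(1)] xu by simp
    finally show ?case using Suc by simp
  qed
  have L1: "P \<longlonglongrightarrow> sqr u" unfolding P_def sqr_def by (rule summable_LIMSEQ[OF summable_sqr[OF u(2)]])
  have "(\<lambda>n. x (P n)) \<longlonglongrightarrow> x (sqr u)"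
  proof (rule LIM_zero_cancel, rule tendsto_norm_zero_cancel)
    have lim0: "(\<lambda>n. norm (P n - sqr u)) \<longlonglongrightarrow> 0" by (rule tendsto_norm_zero, rule LIM_zero[OF L1])
    have bnd: "norm (x (P n) - x (sqr u)) \<le> norm (P n - sqr u)" for n
      using om_bound[OF C x, of "P n - sqr u"] om_diff[OF C x PC sC] subalg_diff[OF C PC sC] by simp
    show "(\<lambda>n. norm (x (P n) - x (sqr u))) \<longlonglongrightarrow> 0"
      by (rule Lim_null_comparison[OF _ lim0]) (intro always_eventually allI, simp add: bnd)
  qed
  moreover have "(\<lambda>n. x (P n)) \<longlonglongrightarrow> of_real (sqr \<tau>)"
    unfolding xP sqr_def
    by (rule tendsto_of_real, rule summable_LIMSEQ[OF summable_sqr]) (use tau in simp)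
  ultimately show ?thesis using LIMSEQ_unique by blast
qed

lemma sqr_real_pos:
  fixes \<tau> :: real
  assumes "\<bar>\<tau>\<bar> \<le> 1" "\<tau> < 1"
  shows "sqr \<tau> > 0"
proof -
  have "norm (1 - sqr \<tau>) \<le> 1" using sqr_norm_one_minus[of \<tau>] assms by simp
  hence "sqr \<tau> \<ge> 0" by simp
  moreover have "sqr \<tau> * sqr \<tau> = 1 - \<tau>" using sqr_square[of \<tau>] assms by simp
  hence "sqr \<tau> \<noteq> 0" using assms by auto
  ultimately show ?thesis by simp
qed

lemma norm_one_minus_sq:
  fixes a :: "'a::cstar_algebra_1"
  assumes "cstar a = a" "norm a \<le> 1"
  shows "norm (1 - a * a) \<le> 1"
proof -
  have na: "norm (a * a) \<le> 1" using norm_mult_ineq[of a a] assms(2)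
    by (meson mult_le_one norm_ge_zero order_trans)
  define c where "c = sqr (a * a)"
  have cc: "c * c = 1 - a * a" using sqr_square[OF na] by (simp add: c_def)
  have cs: "cstar c = c" using sqr_selfadj[OF na] assms(1) by (simp add: c_def cstar_mult)
  have ac: "a * c = c * a" unfolding c_def by (rule sqr_commute[OF na]) (simp add: mult.assoc)
  define v where "v = a + cscale \<i> c"
  have cv: "cstar v = a - cscale \<i> c"
    using assms(1) cs by (simp add: v_def cstar_add cstar_cscale cscale_minus_left)
  have "cstar v * v = a * a + c * c + cscale \<i> (a * c - c * a)"
    unfolding cv unfolding v_def
    by (simp add: algebra_simps cscale_mult_left cscale_mult_right cscale_cscale cscale_diff_right cscale_minus_left)
  hence vv: "cstar v * v = 1" using cc ac by simp
  hence "norm v ^ 2 = 1" using cstar_identity[of v] by simp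
  hence nv: "norm v = 1" using norm_ge_zero[of v] by (auto simp: power2_eq_1_iff)
  have "v - cstar v = cscale (2 * \<i>) c"
    unfolding cv unfolding v_def by (simp add: cscale_add_left[symmetric] algebra_simps)
  hence "norm (cscale (2 * \<i>) c) \<le> 2"
    using norm_triangle_ineq4[of v "cstar v"] nv by simp
  hence "norm c \<le> 1" by (simp add: norm_cscale norm_mult)
  have "norm (1 - a * a) = norm (cstar c * c)" using cc cs by simp
  also have "\<dots> = norm c ^ 2" by (rule cstar_identity)
  also have "\<dots> \<le> 1" using \<open>norm c \<le> 1\<close> by (simp add: power_le_one)
  finally show ?thesis .
qed



lemma comm_id:
  fixes w s :: "'a::ring"
  assumes sw: "s * w = w * s" and ss: "s * s = w * w"
  shows "(w + s) * (w + s) * w = s * ((w + s) * (w + s))"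
proof -
  have r1: "s * (w * y) = w * (s * y)" for y by (simp add: mult.assoc[symmetric] sw)
  have r2: "s * (s * y) = w * (w * y)" for y by (simp add: mult.assoc[symmetric] ss)
  show ?thesis by (simp add: algebra_simps sw ss r1 r2)
qed

lemma subalg_sqr:
  assumes C: "unital_cstar_subalgebra C" and u: "u \<in> C" "norm u \<le> 1"
  shows "sqr u \<in> C"
  by (rule sqr_in_closed_subalgebra[OF u(2) subalg_closed[OF C] subalg_one[OF C]])
     (use C u in \<open>auto simp: subalg_add subalg_mult subalg_scaleR\<close>)

lemma localize:
  fixes C :: "'a::cstar_algebra_1 set"
  assumes C: "unital_cstar_subalgebra C" "C \<subseteq> center" and x: "x \<in> Omega C"
    and phiK: "\<phi> \<in> KMS_states \<sigma> \<beta>" and faith: "faithful_on C \<phi>"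
    and c: "c \<in> C" "cstar c = c" "x c = 0" and e: "e > 0"
  shows "\<exists>\<psi>\<in>KMS_states \<sigma> \<beta>. Re (\<psi> c) \<le> e"
proof -
  have st: "is_state \<phi>" using phiK by (rule KMS_state)
  have cen: "y \<in> center" if "y \<in> C" for y using that C(2) by blast
  define w where "w = e *\<^sub>R 1 - c"
  have wC: "w \<in> C" using C(1) c(1) by (simp add: w_def subalg_diff subalg_scaleR subalg_one)
  have ws: "cstar w = w" using c(2) by (simp add: w_def cstar_diff cstar_scaleR)
  have xw: "x w = of_real e"
    using om_diff[OF C(1) x subalg_scaleR[OF C(1) subalg_one[OF C(1)]] c(1)] om_scaleR[OF x subalg_one[OF C(1)]]
      om_one[OF x] c(3) by (simp add: w_def)
  define M where "M = norm w + e"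
  have nw0: "norm w \<ge> 0" by (rule norm_ge_zero)
  have M: "M > 0" "norm w \<le> M" "e \<le> M" unfolding M_def using e nw0 by linarith+
  define a where "a = (1 / M) *\<^sub>R w"
  have aC: "a \<in> C" using wC C(1) by (simp add: a_def subalg_scaleR)
  have as: "cstar a = a" using ws by (simp add: a_def cstar_scaleR)
  have na: "norm a \<le> 1" using M by (simp add: a_def field_simps)
  have xa: "x a = of_real (e / M)" using om_scaleR[OF x wC] xw by (simp add: a_def)
  define u where "u = 1 - a * a"
  have uC: "u \<in> C" using aC C(1) by (simp add: u_def subalg_diff subalg_one subalg_mult)
  have us: "cstar u = u" using as by (simp add: u_def cstar_diff cstar_mult)
  have nu: "norm u \<le> 1" unfolding u_def by (rule norm_one_minus_sq[OF as na])
  define \<tau> where "\<tau> = 1 - (e / M)^2"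
  have tau: "\<bar>\<tau>\<bar> \<le> 1" "\<tau> < 1"
  proof -
    have "0 < e / M" "e / M \<le> 1" using e M by auto
    hence "0 < (e / M)^2" "(e / M)^2 \<le> 1" by (auto simp: power_le_one)
    thus "\<bar>\<tau>\<bar> \<le> 1" "\<tau> < 1" by (auto simp: \<tau>_def)
  qed
  have xu: "x u = of_real \<tau>"
    using om_diff[OF C(1) x subalg_one[OF C(1)] subalg_mult[OF C(1) aC aC]] om_one[OF x]
      om_mult[OF x aC aC] xa by (simp add: u_def \<tau>_def power2_eq_square)
  define s0 where "s0 = sqr u"
  have s0C: "s0 \<in> C" unfolding s0_def by (rule subalg_sqr[OF C(1) uC nu])
  have s0s: "cstar s0 = s0" unfolding s0_def by (rule sqr_selfadj[OF nu us])
  have s0sq: "s0 * s0 = a * a" using sqr_square[OF nu] by (simp add: s0_def u_def)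
  have xs0: "x s0 = of_real (sqr \<tau>)" unfolding s0_def by (rule om_sqr[OF C(1) x uC nu xu tau(1)])
  have sqt: "sqr \<tau> > 0" by (rule sqr_real_pos[OF tau])
  define k where "k = sqr (1 - s0)"
  have n1s: "norm (1 - s0) \<le> 1" unfolding s0_def by (rule sqr_norm_one_minus[OF nu])
  have kC: "k \<in> C" unfolding k_def
    by (rule subalg_sqr[OF C(1) _ n1s]) (use s0C C(1) in \<open>simp add: subalg_diff subalg_one\<close>)
  have ks: "cstar k = k" unfolding k_def by (rule sqr_selfadj[OF n1s]) (simp add: cstar_diff s0s)
  have ksq: "k * k = s0" using sqr_square[OF n1s] by (simp add: k_def)
  define s where "s = M *\<^sub>R s0"
  have sC: "s \<in> C" using s0C C(1) by (simp add: s_def subalg_scaleR)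
  have ss: "cstar s = s" using s0s by (simp add: s_def cstar_scaleR)
  have ssq: "s * s = w * w" using s0sq M(1) by (simp add: s_def a_def)
  have xs: "x s = of_real (M * sqr \<tau>)" using om_scaleR[OF x s0C] xs0 by (simp add: s_def)
  define z where "z = w + s"
  have zC: "z \<in> C" using wC sC C(1) by (simp add: z_def subalg_add)
  have zs: "cstar z = z" using ws ss by (simp add: z_def cstar_add)
  have xz: "x z = of_real (e + M * sqr \<tau>)" using om_add[OF x wC sC] xw xs by (simp add: z_def)
  have "M * sqr \<tau> > 0" using M(1) sqt by (rule mult_pos_pos)
  hence "e + M * sqr \<tau> > 0" using e by linarith
  hence "x z \<noteq> 0" unfolding xz of_real_eq_0_iff by linarith
  hence "z \<noteq> 0" using om_zero[OF C(1) x] by auto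
  hence "\<phi> (cstar z * z) \<noteq> 0" using faith zC unfolding faithful_on_def by blast
  moreover have "\<phi> (cstar z * z) = of_real (Re (\<phi> (cstar z * z)))" by (rule st_pos[OF st])
  moreover have "Re (\<phi> (cstar z * z)) \<ge> 0" by (rule st_pos_Re[OF st])
  ultimately have pos: "Re (\<phi> (cstar z * z)) > 0" by (metis less_eq_real_def of_real_0)
  define \<psi> where "\<psi> = (\<lambda>y. \<phi> (cstar z * z * y) / \<phi> (cstar z * z))"
  have \<psi>K: "\<psi> \<in> KMS_states \<sigma> \<beta>" unfolding \<psi>_def
    by (rule kms_weight[OF phiK _ _ pos]) (use zC zs cen in auto)
  have sw: "s * w = w * s" by (rule centerD[OF cen[OF sC]])
  have key: "z * z * w = M *\<^sub>R (cstar (k * z) * (k * z))"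
  proof -
    have "z * z * w = s * (z * z)" unfolding z_def by (rule comm_id[OF sw ssq])
    also have "\<dots> = M *\<^sub>R (k * k * (z * z))" by (simp add: s_def ksq)
    also have "k * k * (z * z) = (z * k) * (k * z)"
    proof -
      have "k * k * (z * z) = k * (k * z) * z" by (simp add: mult.assoc)
      also have "\<dots> = z * (k * (k * z))" using centerD[OF cen[OF zC]] by simp
      finally show ?thesis by (simp add: mult.assoc)
    qed
    also have "z * k = cstar (k * z)" by (simp add: cstar_mult ks zs)
    finally show ?thesis .
  qed
  have "\<phi> (z * z * w) = of_real M * \<phi> (cstar (k * z) * (k * z))"
    using key st_scaleR[OF st] by simp
  also have "\<phi> (cstar (k * z) * (k * z)) = of_real (Re (\<phi> (cstar (k * z) * (k * z))))"
    by (rule st_pos[OF st])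
  finally have pw: "\<phi> (z * z * w) = of_real (M * Re (\<phi> (cstar (k * z) * (k * z))))" by simp
  have q0: "Re (\<phi> (cstar (k * z) * (k * z))) \<ge> 0" by (rule st_pos_Re[OF st])
  have cw: "c = e *\<^sub>R 1 - w" by (simp add: w_def)
  have "\<phi> (z * z * c) = of_real e * \<phi> (z * z) - \<phi> (z * z * w)"
    unfolding cw by (simp add: right_diff_distrib st_diff[OF st] st_scaleR[OF st])
  hence "\<psi> c = of_real e - \<phi> (z * z * w) / \<phi> (z * z)"
  proof -
    have "Re (\<phi> (z * z)) > 0" using pos zs by simp
    hence "\<phi> (z * z) \<noteq> 0" by auto
    thus ?thesis unfolding \<psi>_def zs using \<open>\<phi> (z * z * c) = _\<close> by (simp add: diff_divide_distrib)
  qed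
  hence "Re (\<psi> c) = e - (M * Re (\<phi> (cstar (k * z) * (k * z)))) / Re (\<phi> (z * z))"
    using pw st_pos[OF st, of z] zs by (metis Re_complex_of_real minus_complex.sel of_real_divide)
  moreover have "(M * Re (\<phi> (cstar (k * z) * (k * z)))) / Re (\<phi> (z * z)) \<ge> 0"
    using M q0 pos zs by simp
  ultimately have "Re (\<psi> c) \<le> e" by simp
  thus ?thesis using \<psi>K by blast
qed



lemma J_sum:
  fixes C :: "'a::cstar_algebra_1 set"
  assumes C: "unital_cstar_subalgebra C" and x: "x \<in> Omega C" and A: "finite A" "A \<subseteq> J_ideal C x"
  shows "(\<Sum>a\<in>A. cstar a * a) \<in> J_ideal C x"
  using A
proof (induction A rule: finite_induct)
  case empty thus ?case using subalg_zero[OF C] om_zero[OF C x] by (simp add: J_ideal_def)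
next
  case (insert b A)
  have bC: "b \<in> C" "x b = 0" using insert.prems by (auto simp: J_ideal_def)
  have bb: "cstar b * b \<in> C" "x (cstar b * b) = 0"
    using bC C om_mult[OF x] by (auto simp: subalg_mult subalg_cstar)
  have IH: "(\<Sum>a\<in>A. cstar a * a) \<in> C" "x (\<Sum>a\<in>A. cstar a * a) = 0"
    using insert by (auto simp: J_ideal_def)
  show ?case using insert(1,2) bb IH om_add[OF x bb(1) IH(1)] subalg_add[OF C bb(1) IH(1)]
    by (simp add: J_ideal_def)
qed

lemma finite_approx:
  fixes C :: "'a::cstar_algebra_1 set"
  assumes C: "unital_cstar_subalgebra C" "C \<subseteq> center" and x: "x \<in> Omega C"
    and phiK: "\<phi> \<in> KMS_states \<sigma> \<beta>" and faith: "faithful_on C \<phi>"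
    and A: "finite A" "A \<subseteq> J_ideal C x" and e0: "e0 > 0"
  shows "\<exists>\<psi>\<in>KMS_states \<sigma> \<beta>. \<forall>a\<in>A. cmod (\<psi> a) \<le> e0"
proof -
  define c where "c = (\<Sum>a\<in>A. cstar a * a)"
  have cJ: "c \<in> J_ideal C x" unfolding c_def by (rule J_sum[OF C(1) x A])
  have cs: "cstar c = c" by (simp add: c_def cstar_sum cstar_mult cstar_cstar)
  have cC: "c \<in> C" "x c = 0" using cJ by (auto simp: J_ideal_def)
  have e2: "e0 ^ 2 > 0" using e0 by simp
  from localize[OF C x phiK faith cC(1) cs cC(2) e2]
  obtain \<psi> where \<psi>: "\<psi> \<in> KMS_states \<sigma> \<beta>" "Re (\<psi> c) \<le> e0 ^ 2" by blast
  have st: "is_state \<psi>" using \<psi>(1) by (rule KMS_state)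
  have "cmod (\<psi> a) \<le> e0" if a: "a \<in> A" for a
  proof -
    have "\<psi> c = (\<Sum>b\<in>A. \<psi> (cstar b * b))" unfolding c_def by (rule st_sum[OF st])
    hence "Re (\<psi> c) = (\<Sum>b\<in>A. Re (\<psi> (cstar b * b)))" by (simp add: Re_sum)
    moreover have "Re (\<psi> (cstar a * a)) \<le> (\<Sum>b\<in>A. Re (\<psi> (cstar b * b)))"
      by (rule member_le_sum[OF a _ A(1)]) (rule st_pos_Re[OF st])
    ultimately have "cmod (\<psi> a) ^ 2 \<le> e0 ^ 2" using st_CS[OF st, of a] \<psi>(2) by linarith
    thus ?thesis by (rule power2_le_imp_le) (use e0 in simp)
  qed
  thus ?thesis using \<psi>(1) by blast
qed

lemma closed_norm_le: "closed {\<psi>::'a \<Rightarrow> complex. cmod (\<psi> a) \<le> e}"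
  by (rule closed_Collect_le; intro continuous_on_norm cont_coord continuous_on_const)

lemma Kx_nonempty:
  fixes C :: "'a::cstar_algebra_1 set"
  assumes C: "unital_cstar_subalgebra C" "C \<subseteq> center" and x: "x \<in> Omega C"
    and phiK: "\<phi> \<in> KMS_states \<sigma> \<beta>" and faith: "faithful_on C \<phi>"
  shows "KMS_states_at \<sigma> \<beta> C x \<noteq> {}"
proof -
  define T where "T = (\<lambda>p. {\<psi>::'a\<Rightarrow>complex. cmod (\<psi> (fst p)) \<le> snd p})"
  define I where "I = J_ideal C x \<times> {e::real. e > 0}"
  have "KMS_states \<sigma> \<beta> \<inter> \<Inter>(T ` I) \<noteq> {}"
  proof (rule compact_imp_fip[OF compact_KMS])
    fix S assume "S \<in> T ` I"
    then obtain p where "S = T p" by blast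
    thus "closed S" unfolding T_def using closed_norm_le by simp
  next
    fix F' assume F': "finite F'" "F' \<subseteq> T ` I"
    then obtain I0 where I0: "I0 \<subseteq> I" "finite I0" "F' = T ` I0"
      using finite_subset_image[OF F'] by blast
    show "KMS_states \<sigma> \<beta> \<inter> \<Inter>F' \<noteq> {}"
    proof (cases "I0 = {}")
      case True thus ?thesis using I0 phiK by auto
    next
      case False
      define e0 where "e0 = Min (snd ` I0)"
      have fi: "finite (snd ` I0)" "snd ` I0 \<noteq> {}" using I0(2) False by auto
      have pos: "\<forall>q\<in>snd ` I0. 0 < q" using I0(1) by (auto simp: I_def)
      have e0: "e0 > 0" unfolding e0_def using Min_gr_iff[OF fi] pos by blast
      have le: "e0 \<le> snd p" if "p \<in> I0" for p unfolding e0_def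
        by (rule Min_le[OF fi(1)]) (use that in blast)
      have A: "finite (fst ` I0)" "fst ` I0 \<subseteq> J_ideal C x" using I0 by (auto simp: I_def)
      obtain \<psi> where \<psi>: "\<psi> \<in> KMS_states \<sigma> \<beta>" "\<forall>a\<in>fst ` I0. cmod (\<psi> a) \<le> e0"
        using finite_approx[OF C x phiK faith A e0] by blast
      have "\<psi> \<in> T p" if "p \<in> I0" for p
      proof -
        have "cmod (\<psi> (fst p)) \<le> e0" using \<psi>(2) that by blast
        thus ?thesis using le[OF that] by (simp add: T_def)
      qed
      hence "\<psi> \<in> \<Inter>F'" unfolding I0(3) by blast
      thus ?thesis using \<psi>(1) by blast
    qed
  qed
  then obtain \<psi> where \<psi>: "\<psi> \<in> KMS_states \<sigma> \<beta>" "\<psi> \<in> \<Inter>(T ` I)" by blast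
  have "\<psi> a = 0" if a: "a \<in> J_ideal C x" for a
  proof (rule ccontr)
    assume "\<psi> a \<noteq> 0"
    hence "cmod (\<psi> a) / 2 > 0" by simp
    hence "(a, cmod (\<psi> a) / 2) \<in> I" using a by (simp add: I_def)
    hence "\<psi> \<in> T (a, cmod (\<psi> a) / 2)" using \<psi>(2) by blast
    hence "cmod (\<psi> a) \<le> cmod (\<psi> a) / 2" by (simp add: T_def)
    thus False using \<open>cmod (\<psi> a) / 2 > 0\<close> by linarith
  qed
  hence "\<psi> \<in> KMS_states_at \<sigma> \<beta> C x" using \<psi>(1) by (simp add: KMS_states_at_def)
  thus ?thesis by blast
qed

theorem theorem3p6:
  fixes \<sigma> :: "real \<Rightarrow> 'a::cstar_algebra_1 \<Rightarrow> 'a" and \<beta> :: real and C :: "'a set"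
  assumes "is_flow \<sigma>"
    and "unital_cstar_subalgebra C"
    and "C \<subseteq> center"
  shows "Ext (KMS_states \<sigma> \<beta>) = (\<Union>x\<in>Omega C. Ext (KMS_states_at \<sigma> \<beta> C x))
     \<and> disjoint_family_on (\<lambda>x. Ext (KMS_states_at \<sigma> \<beta> C x)) (Omega C)
     \<and> ((\<exists>\<phi>\<in>KMS_states \<sigma> \<beta>. faithful_on C \<phi>) \<longrightarrow>
          (\<forall>x\<in>Omega C. KMS_states_at \<sigma> \<beta> C x \<noteq> {})
          \<and> (\<exists>f. inj_on f (Omega C) \<and> f ` Omega C \<subseteq> Ext (KMS_states \<sigma> \<beta>)))"
proof (intro conjI impI)
  note C = assms(2,3)
  show "Ext (KMS_states \<sigma> \<beta>) = (\<Union>x\<in>Omega C. Ext (KMS_states_at \<sigma> \<beta> C x))"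
    by (rule parts12(1)[OF C])
  show "disjoint_family_on (\<lambda>x. Ext (KMS_states_at \<sigma> \<beta> C x)) (Omega C)"
    by (rule parts12(2)[OF C])
  assume "\<exists>\<phi>\<in>KMS_states \<sigma> \<beta>. faithful_on C \<phi>"
  then obtain \<phi> where \<phi>: "\<phi> \<in> KMS_states \<sigma> \<beta>" "faithful_on C \<phi>" by blast
  have ne: "KMS_states_at \<sigma> \<beta> C x \<noteq> {}" if "x \<in> Omega C" for x
    by (rule Kx_nonempty[OF C that \<phi>])
  thus "\<forall>x\<in>Omega C. KMS_states_at \<sigma> \<beta> C x \<noteq> {}" by blast
  have ene: "Ext (KMS_states_at \<sigma> \<beta> C x) \<noteq> {}" if "x \<in> Omega C" for x
    by (rule Ext_nonempty[OF compact_KMS_at ne[OF that] closed_KMS_at])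
  define f where "f x = (SOME \<psi>. \<psi> \<in> Ext (KMS_states_at \<sigma> \<beta> C x))" for x
  have fx: "f x \<in> Ext (KMS_states_at \<sigma> \<beta> C x)" if "x \<in> Omega C" for x
    unfolding f_def using ene[OF that] by (simp add: some_in_eq)
  have "inj_on f (Omega C)"
  proof (rule inj_onI)
    fix x y assume xy: "x \<in> Omega C" "y \<in> Omega C" "f x = f y"
    have "f x \<in> KMS_states_at \<sigma> \<beta> C x" "f x \<in> KMS_states_at \<sigma> \<beta> C y"
      using fx[OF xy(1)] fx[OF xy(2)] xy(3) Ext_sub by auto
    thus "x = y" by (rule KMS_at_unique[OF C(1) xy(1,2)])
  qed
  moreover have "f ` Omega C \<subseteq> Ext (KMS_states \<sigma> \<beta>)"
    using fx part2[OF C(1)] by blast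
  ultimately show "\<exists>f. inj_on f (Omega C) \<and> f ` Omega C \<subseteq> Ext (KMS_states \<sigma> \<beta>)" by blast
qed


end
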